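(* Let $w\in\mathcal{W}$ with $\Sigma_w$ positive definite, satisfying (C1) with parameter $\rho_w\ge1$: $\sqrt{w(\boldsymbol{X})}\|\Sigma_w^{-1/2}\boldsymbol{X}\|_2/\sqrt d\le\rho_w$ a.s., and (C2) with parameter $b_w\ge0$: $w(\boldsymbol{X})\|\Sigma_w^{-1/2}\mathrm{approx}_w(\boldsymbol{X})\boldsymbol{X}\|_2/\sqrt d\le b_w$ a.s. Let $\Delta=\Sigma_w^{-1/2}(\hat\Sigma_w-\Sigma_w)\Sigma_w^{-1/2}$ and pick any $t>0$. If $\|\Delta\|_2<1$, then $$\|\bar{\boldsymbol{\beta}}_w-\boldsymbol{\beta}_w\|_{\Sigma_w}\le\frac{1}{1-\|\Delta\|_2}\left\|\hat{\mathbb{E}}[w(\boldsymbol{X})\mathrm{approx}_w(\boldsymbol{X})\boldsymbol{X}]\right\|_{\Sigma_w^{-1}}.$$ Moreover, with probability at least $1-e^{-t}$, $$\left\|\hat{\mathbb{E}}[w(\boldsymbol{X})\mathrm{approx}_w(\boldsymbol{X})\boldsymbol{X}]\right\|_{\Sigma_w^{-1}}\le\sqrt{\frac{\mathbb{E}[\|\Sigma_w^{-1/2}w(\boldsymbol{X})\mathrm{approx}_w(\boldsymbol{X})\boldsymbol{X}\|_2^2]}{n}}(1+\sqrt{8t})+\frac{4b_wt\sqrt d}{3n}\le\sqrt{\frac{\rho_w^2d\,\mathbb{E}[w(\boldsymbol{X})\mathrm{approx}_w(\boldsymbol{X})^2]}{n}}(1+\sqrt{8t})+\frac{4b_wt\sqrt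 d}{3n}.$$
   Context: $\boldsymbol{X}\in\mathbb{R}^d$ features and $Y\in\mathbb{R}$ outcome with training distribution $P^{\text{tr}}$; $\mathcal{X}$ is the support of $\boldsymbol{X}$, $\mathbb{E}$ expectation under $P^{\text{tr}}$. We observe $n$ i.i.d. samples from $P^{\text{tr}}$, $\hat{\mathbb{E}}$ is the empirical average. $\mathcal{W}=\{w:\mathcal{X}\to\mathbb{R}^+\mid\mathbb{E}[w(\boldsymbol{X})]=1\}$. $\Sigma_w=\mathbb{E}[w(\boldsymbol{X})\boldsymbol{X}\boldsymbol{X}^T]$, $\boldsymbol{\beta}_w=\Sigma_w^{-1}\mathbb{E}[w(\boldsymbol{X})\boldsymbol{X}Y]$, $\hat\Sigma_w=\hat{\mathbb{E}}[w(\boldsymbol{X})\boldsymbol{X}\boldsymbol{X}^T]$, $\bar{\boldsymbol{\beta}}_w=\hat\Sigma_w^{-1}\hat{\mathbb{E}}[w(\boldsymbol{X})\boldsymbol{X}\,\mathbb{E}[Y\mid\boldsymbol{X}]]$. $\mathrm{approx}_w(\boldsymbol{X})=\mathbb{E}[Y\mid\boldsymbol{X}]-\langle\boldsymbol{\beta}_w,\boldsymbol{X}\rangle$. For a positive definite matrix $A$, $\|v\|_A=\sqrt{v^TAv}$; $\|\cdot\|_2$ on matrices is the spectral norm. *)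

theory Defs
  imports "HOL-Probability.Probability"
begin

definition outer :: "real^'d \<Rightarrow> real^'d^'d" where
  "outer x = (\<chi> i j. x $ i * x $ j)"

definition posdef :: "real^'d^'d \<Rightarrow> bool" where
  "posdef A \<longleftrightarrow> transpose A = A \<and> (\<forall>x. x \<noteq> 0 \<longrightarrow> 0 < x \<bullet> (A *v x))"

definition mat_sqrt :: "real^'d^'d \<Rightarrow> real^'d^'d" where
  "mat_sqrt A = (THE B. posdef B \<and> B ** B = A)"

definition mat_inv_sqrt :: "real^'d^'d \<Rightarrow> real^'d^'d" where
  "mat_inv_sqrt A = matrix_inv (mat_sqrt A)"

definition anorm :: "real^'d^'d \<Rightarrow> real^'d \<Rightarrow> real" where
  "anorm A v = sqrt (v \<bullet> (A *v v))"

definition spec_norm :: "real^'d^'d \<Rightarrow> real" where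
  "spec_norm A = onorm (\<lambda>x. A *v x)"

definition in_W :: "((real^'d) \<times> real) measure \<Rightarrow> (real^'d \<Rightarrow> real) \<Rightarrow> bool" where
  "in_W P w \<longleftrightarrow> w \<in> borel_measurable borel \<and> (\<forall>x. 0 \<le> w x) \<and>
     integrable P (\<lambda>z. w (fst z)) \<and> (LINT z|P. w (fst z)) = 1"

definition is_cond_exp_X :: "((real^'d) \<times> real) measure \<Rightarrow> (real^'d \<Rightarrow> real) \<Rightarrow> bool" where
  "is_cond_exp_X P m \<longleftrightarrow> m \<in> borel_measurable borel \<and> integrable P snd \<and>
     integrable P (\<lambda>z. m (fst z)) \<and>
     (\<forall>A\<in>sets borel. (LINT z|P. indicator A (fst z) * snd z) = (LINT z|P. indicator A (fst z) * m (fst z)))"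

definition Sigma_w :: "((real^'d) \<times> real) measure \<Rightarrow> (real^'d \<Rightarrow> real) \<Rightarrow> real^'d^'d" where
  "Sigma_w P w = (LINT z|P. w (fst z) *\<^sub>R outer (fst z))"

definition beta_w :: "((real^'d) \<times> real) measure \<Rightarrow> (real^'d \<Rightarrow> real) \<Rightarrow> real^'d" where
  "beta_w P w = matrix_inv (Sigma_w P w) *v (LINT z|P. (w (fst z) * snd z) *\<^sub>R fst z)"

text \<open>\<open>approx_w(x) = E[Y|X=x] - \<langle>\<beta>_w, x\<rangle>\<close>, with \<open>m\<close> the conditional expectation.\<close>
definition approx_w :: "((real^'d) \<times> real) measure \<Rightarrow> (real^'d \<Rightarrow> real) \<Rightarrow> (real^'d \<Rightarrow> real) \<Rightarrow> real^'d \<Rightarrow> real" where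
  "approx_w P w m x = m x - beta_w P w \<bullet> x"

definition emp :: "nat \<Rightarrow> (nat \<Rightarrow> (real^'d) \<times> real) \<Rightarrow> ((real^'d) \<times> real \<Rightarrow> 'b::real_vector) \<Rightarrow> 'b" where
  "emp n S f = (1 / real n) *\<^sub>R (\<Sum>i<n. f (S i))"

definition Sigma_hat :: "nat \<Rightarrow> (nat \<Rightarrow> (real^'d) \<times> real) \<Rightarrow> (real^'d \<Rightarrow> real) \<Rightarrow> real^'d^'d" where
  "Sigma_hat n S w = emp n S (\<lambda>z. w (fst z) *\<^sub>R outer (fst z))"

definition beta_bar :: "nat \<Rightarrow> (nat \<Rightarrow> (real^'d) \<times> real) \<Rightarrow> (real^'d \<Rightarrow> real) \<Rightarrow> (real^'d \<Rightarrow> real) \<Rightarrow> real^'d" where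
  "beta_bar n S w m = matrix_inv (Sigma_hat n S w) *v emp n S (\<lambda>z. (w (fst z) * m (fst z)) *\<^sub>R fst z)"

end

theory Submission
  imports Defs
begin


lemma fact_ge_pow3: "2 * 3 ^ k \<le> (fact (k + 2) :: real)"
proof (induction k)
  case 0 then show ?case by simp
next
  case (Suc k)
  have "fact (Suc k + 2) = real (k + 3) * fact (k + 2)"
    by (simp add: algebra_simps)
  also have "\<dots> \<ge> 3 * fact (k + 2)"
    by (intro mult_right_mono) auto
  finally have "3 * fact (k + 2) \<le> (fact (Suc k + 2) :: real)" .
  moreover have "2 * 3 ^ Suc k = 3 * (2 * 3 ^ k :: real)" by simp
  ultimately show ?case using Suc by linarith
qed

lemma exp_bernstein_bound:
  fixes u r :: real
  assumes "\<bar>u\<bar> \<le> r" "r < 3"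
  shows "exp u \<le> 1 + u + u\<^sup>2 / (2 * (1 - r / 3))"
proof -
  have r0: "0 \<le> r" using assms by linarith
  have q: "r / 3 < 1" "0 \<le> r / 3" using assms r0 by auto
  have sg: "summable (\<lambda>k. (r / 3) ^ k)" using q by (intro summable_geometric) auto
  have sg2: "summable (\<lambda>k. u\<^sup>2 / 2 * (r / 3) ^ k)" using sg by (rule summable_mult)
  have bnd': "\<bar>u\<bar> ^ (k + 2) / fact (k + 2) \<le> u\<^sup>2 / 2 * (r / 3) ^ k" for k
  proof -
    have "\<bar>u\<bar> ^ (k + 2) / fact (k + 2) = u\<^sup>2 * \<bar>u\<bar> ^ k / fact (k + 2)"
      by (simp add: power_add power2_eq_square mult.commute)
    also have "\<dots> \<le> u\<^sup>2 * r ^ k / (2 * 3 ^ k)"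
    proof (intro frac_le mult_left_mono power_mono)
    qed (use assms fact_ge_pow3[of k] in auto)
    also have "\<dots> = u\<^sup>2 / 2 * (r / 3) ^ k" by (simp add: power_divide)
    finally show ?thesis .
  qed
  have bnd: "inverse (fact (k + 2)) *\<^sub>R (u ^ (k + 2)) \<le> u\<^sup>2 / 2 * (r / 3) ^ k" for k
  proof -
    have "u ^ (k + 2) \<le> \<bar>u\<bar> ^ (k + 2)" by (metis abs_ge_self power_abs)
    then have "inverse (fact (k + 2)) *\<^sub>R (u ^ (k + 2)) \<le> \<bar>u\<bar> ^ (k + 2) / fact (k + 2)"
      by (simp add: divide_inverse mult.commute)
    also have "\<dots> \<le> u\<^sup>2 / 2 * (r / 3) ^ k" by (rule bnd')
    finally show ?thesis .
  qed
  have s1: "summable (\<lambda>k. inverse (fact (k + 2)) *\<^sub>R (u ^ (k + 2)))"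
  proof (rule summable_comparison_test[OF _ sg2])
    show "\<exists>N. \<forall>n\<ge>N. norm (inverse (fact (n + 2)) *\<^sub>R (u ^ (n + 2))) \<le> u\<^sup>2 / 2 * (r / 3) ^ n"
    proof (intro exI allI impI)
      fix n :: nat
      have "norm (inverse (fact (n + 2)) *\<^sub>R (u ^ (n + 2))) = inverse (fact (n + 2)) *\<^sub>R (\<bar>u\<bar> ^ (n + 2))"
        by (simp only: real_norm_def real_scaleR_def abs_mult abs_inverse power_abs abs_of_nonneg[OF fact_ge_zero])
      also have "\<dots> \<le> u\<^sup>2 / 2 * (r / 3) ^ n" using bnd'[of n]
        by (metis divide_inverse mult.commute real_scaleR_def)
      finally show "norm (inverse (fact (n + 2)) *\<^sub>R (u ^ (n + 2))) \<le> u\<^sup>2 / 2 * (r / 3) ^ n" .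
    qed
  qed
  have "(\<Sum>k. inverse (fact (k + 2)) *\<^sub>R (u ^ (k + 2))) \<le> (\<Sum>k. u\<^sup>2 / 2 * (r / 3) ^ k)"
    by (intro suminf_le s1 sg2 bnd)
  also have "\<dots> = u\<^sup>2 / 2 * (1 / (1 - r / 3))"
    using suminf_mult[OF sg, of "u\<^sup>2 / 2"] suminf_geometric[of "r / 3"] q by simp
  also have "\<dots> = u\<^sup>2 / (2 * (1 - r / 3))" by simp
  finally show ?thesis using exp_first_two_terms[of u] by simp
qed

lemma (in prob_space) mgf_bound:
  fixes D :: "'a \<Rightarrow> real"
  assumes D[measurable]: "D \<in> borel_measurable M"
    and bnd: "\<And>x. x \<in> space M \<Longrightarrow> \<bar>D x\<bar> \<le> c"
    and mean: "expectation D = 0"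
    and var: "expectation (\<lambda>x. (D x)\<^sup>2) \<le> s2"
    and l: "0 \<le> l" "l * c < 3"
  shows "(\<integral>\<^sup>+x. ennreal (exp (l * D x)) \<partial>M) \<le> ennreal (exp (l\<^sup>2 * s2 / (2 * (1 - l * c / 3))))"
proof -
  define k where "k = 2 * (1 - l * c / 3)"
  have k: "0 < k" using l by (simp add: k_def mult.commute)
  have intD: "integrable M D"
    by (intro integrable_const_bound[where B=c]) (use bnd in auto)
  have intD2: "integrable M (\<lambda>x. (D x)\<^sup>2)"
  proof (intro integrable_const_bound[where B="c\<^sup>2"])
    show "AE x in M. norm ((D x)\<^sup>2) \<le> c\<^sup>2"
    proof (intro AE_I2)
      fix x assume "x \<in> space M"
      then have "\<bar>D x\<bar> \<le> \<bar>c\<bar>" using bnd by fastforce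
      then show "norm ((D x)\<^sup>2) \<le> c\<^sup>2" by (simp add: abs_le_square_iff)
    qed
  qed simp
  have intE: "integrable M (\<lambda>x. exp (l * D x))"
  proof (intro integrable_const_bound[where B="exp (l * c)"])
    show "AE x in M. norm (exp (l * D x)) \<le> exp (l * c)"
      using bnd l by (auto intro!: AE_I2 mult_left_mono) (meson abs_le_D1 mult_left_mono)
  qed simp
  have pw: "exp (l * D x) \<le> 1 + l * D x + l\<^sup>2 / k * (D x)\<^sup>2" if x: "x \<in> space M" for x
  proof -
    have "\<bar>l * D x\<bar> \<le> l * c" using bnd[OF x] l by (simp add: abs_mult mult_left_mono)
    from exp_bernstein_bound[OF this l(2)]
    show ?thesis by (simp add: k_def power_mult_distrib)
  qed
  have "expectation (\<lambda>x. exp (l * D x)) \<le> expectation (\<lambda>x. 1 + l * D x + l\<^sup>2 / k * (D x)\<^sup>2)"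
    using intD intD2 intE pw by (intro integral_mono) auto
  also have "\<dots> = 1 + l * expectation D + l\<^sup>2 / k * expectation (\<lambda>x. (D x)\<^sup>2)"
    using intD intD2 by (simp add: prob_space)
  also have "\<dots> \<le> 1 + l\<^sup>2 * s2 / k"
    using mean var k by (simp add: mult_left_mono divide_right_mono)
  also have "\<dots> \<le> exp (l\<^sup>2 * s2 / k)" by simp
  finally have "expectation (\<lambda>x. exp (l * D x)) \<le> exp (l\<^sup>2 * s2 / k)" .
  moreover have "(\<integral>\<^sup>+x. ennreal (exp (l * D x)) \<partial>M) = ennreal (expectation (\<lambda>x. exp (l * D x)))"
    using intE by (intro nn_integral_eq_integral) auto
  ultimately show ?thesis by (simp add: k_def)
qed


locale vb = prob_space M for M :: "'a measure" +
  fixes Z :: "'a \<Rightarrow> 'b::euclidean_space" and B :: real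
  assumes Zm[measurable]: "Z \<in> borel_measurable M"
    and Zb: "\<And>x. x \<in> space M \<Longrightarrow> norm (Z x) \<le> B"
begin

definition "PP (m::nat) = PiM {..<m} (\<lambda>_. M)"
definition "ps y (m::nat) = (\<Sum>j<m. Z (y j))"
definition "EE m F = (\<integral>y. F (ps y m) \<partial>PP m)"
definition "lip F \<longleftrightarrow> (\<forall>a b. \<bar>F a - F b\<bar> \<le> norm (a - b))"
definition "up F a = (\<integral>x. F (a + Z x) \<partial>M)"

lemma B_nonneg: "0 \<le> B"
  using Zb[of "SOME x. x \<in> space M"] not_empty some_in_eq
  by (metis norm_ge_zero order_trans)

interpretation PS: product_prob_space "\<lambda>_::nat. M"
  by unfold_locales

lemma prob_PP: "prob_space (PP m)"
  unfolding PP_def by (rule prob_space_PiM) (rule prob_space_axioms)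

lemma ps_meas[measurable]: "(\<lambda>y. ps y m) \<in> borel_measurable (PP m)"
  unfolding PP_def ps_def by measurable

lemma ps_bound: "y \<in> space (PP m) \<Longrightarrow> norm (ps y m) \<le> real m * B"
proof -
  assume y: "y \<in> space (PP m)"
  have "norm (ps y m) \<le> (\<Sum>j<m. norm (Z (y j)))" unfolding ps_def by (rule norm_sum)
  also have "\<dots> \<le> (\<Sum>j<m. B)"
    using y by (intro sum_mono Zb) (auto simp: PP_def space_PiM)
  also have "\<dots> = m * B" by simp
  finally show ?thesis .
qed

lemma lip_cont: "lip F \<Longrightarrow> continuous_on UNIV F"
  unfolding lip_def
  by (intro lipschitz_on_continuous_on[of 1]) (auto simp: lipschitz_on_def dist_real_def dist_norm)

lemma lip_meas: "lip F \<Longrightarrow> F \<in> borel_measurable borel"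
  by (intro borel_measurable_continuous_onI lip_cont)

lemma lip_bound: "lip F \<Longrightarrow> \<bar>F a\<bar> \<le> \<bar>F 0\<bar> + norm a"
proof -
  assume "lip F"
  then have "\<bar>F a - F 0\<bar> \<le> norm (a - 0)" unfolding lip_def by blast
  then show ?thesis by simp
qed

lemma ps_Suc: "y \<in> space (PP m) \<Longrightarrow> x \<in> space M \<Longrightarrow> ps (y(m := x)) (Suc m) = ps y m + Z x"
proof -
  have "(\<Sum>j<m. Z ((y(m:=x)) j)) = (\<Sum>j<m. Z (y j))" by (intro sum.cong) auto
  then show ?thesis unfolding ps_def by simp
qed

lemma rec_int:
  fixes K :: real
  assumes F[measurable]: "F \<in> borel_measurable borel"
    and Fb: "\<And>a. norm a \<le> Suc m * B \<Longrightarrow> \<bar>F a\<bar> \<le> K"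
  shows "EE (Suc m) F = (\<integral>y. (\<integral>x. F (ps y m + Z x) \<partial>M) \<partial>PP m)"
proof -
  interpret P1: prob_space "PP (Suc m)" by (rule prob_PP)
  have int: "integrable (PP (Suc m)) (\<lambda>y. F (ps y (Suc m)))"
    by (intro P1.integrable_const_bound[where B=K]) (auto intro!: AE_I2 Fb ps_bound)
  have "EE (Suc m) F = (\<integral>y. F (ps y (Suc m)) \<partial>PiM (insert m {..<m}) (\<lambda>_. M))"
    unfolding EE_def PP_def by (simp add: lessThan_Suc)
  also have "\<dots> = (\<integral>y. (\<integral>x. F (ps (y(m:=x)) (Suc m)) \<partial>M) \<partial>PiM {..<m} (\<lambda>_. M))"
    using int unfolding PP_def by (intro PS.product_integral_insert) (auto simp: lessThan_Suc)
  also have "\<dots> = (\<integral>y. (\<integral>x. F (ps y m + Z x) \<partial>M) \<partial>PP m)"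
    unfolding PP_def
    by (intro Bochner_Integration.integral_cong refl) (auto simp: ps_Suc PP_def)
  finally show ?thesis .
qed

lemma rec_nn:
  assumes g[measurable]: "g \<in> borel_measurable borel"
  shows "(\<integral>\<^sup>+y. g (ps y (Suc m)) \<partial>PP (Suc m)) = (\<integral>\<^sup>+y. (\<integral>\<^sup>+x. g (ps y m + Z x) \<partial>M) \<partial>PP m)"
proof -
  have "(\<integral>\<^sup>+y. g (ps y (Suc m)) \<partial>PP (Suc m)) = (\<integral>\<^sup>+y. g (ps y (Suc m)) \<partial>PiM (insert m {..<m}) (\<lambda>_. M))"
    unfolding PP_def by (simp add: lessThan_Suc)
  also have "\<dots> = (\<integral>\<^sup>+y. (\<integral>\<^sup>+x. g (ps (y(m:=x)) (Suc m)) \<partial>M) \<partial>PiM {..<m} (\<lambda>_. M))"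
  proof (intro PS.product_nn_integral_insert)
    show "(\<lambda>y. g (ps y (Suc m))) \<in> borel_measurable (PiM (insert m {..<m}) (\<lambda>_. M))"
      using ps_meas[of "Suc m"] unfolding PP_def by (simp add: lessThan_Suc)
  qed auto
  also have "\<dots> = (\<integral>\<^sup>+y. (\<integral>\<^sup>+x. g (ps y m + Z x) \<partial>M) \<partial>PP m)"
    unfolding PP_def
    by (intro nn_integral_cong) (auto simp: ps_Suc PP_def)
  finally show ?thesis .
qed

definition "mu = (\<integral>x. norm (Z x) \<partial>M)"
definition "vv = (\<integral>x. (norm (Z x))\<^sup>2 \<partial>M)"

lemma intZ: "integrable M Z"
  by (intro integrable_const_bound[where B=B]) (auto intro!: AE_I2 Zb)

lemma int_nZ: "integrable M (\<lambda>x. norm (Z x))"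
  by (intro integrable_const_bound[where B=B]) (auto intro!: AE_I2 Zb)

lemma int_nZ2: "integrable M (\<lambda>x. (norm (Z x))\<^sup>2)"
proof (intro integrable_const_bound[where B="B\<^sup>2"])
  show "AE x in M. norm ((norm (Z x))\<^sup>2) \<le> B\<^sup>2"
    using Zb by (auto intro!: AE_I2 power_mono)
qed simp

lemma mu_le_B: "mu \<le> B"
proof -
  have "mu \<le> (\<integral>x. B \<partial>M)" unfolding mu_def
    using int_nZ Zb by (intro integral_mono) auto
  then show ?thesis by (simp add: prob_space)
qed

lemma mu_nonneg: "0 \<le> mu" unfolding mu_def by simp

lemma mu2_le_vv: "mu\<^sup>2 \<le> vv"
  using variance_eq[OF int_nZ int_nZ2] variance_positive[of "\<lambda>x. norm (Z x)"]
  unfolding mu_def vv_def by simp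

lemma vv_le: "vv \<le> B\<^sup>2"
proof -
  have "vv \<le> (\<integral>x. B\<^sup>2 \<partial>M)" unfolding vv_def
    using int_nZ2 Zb by (intro integral_mono) (auto intro!: power_mono)
  then show ?thesis by (simp add: prob_space)
qed

lemma up_int: "lip F \<Longrightarrow> integrable M (\<lambda>x. F (a + Z x))"
proof (intro integrable_const_bound[where B="\<bar>F 0\<bar> + norm a + B"])
  assume F: "lip F"
  show "AE x in M. norm (F (a + Z x)) \<le> \<bar>F 0\<bar> + norm a + B"
  proof (intro AE_I2)
    fix x assume x: "x \<in> space M"
    have "\<bar>F (a + Z x)\<bar> \<le> \<bar>F 0\<bar> + norm (a + Z x)" by (rule lip_bound[OF F])
    also have "\<dots> \<le> \<bar>F 0\<bar> + norm a + B" using Zb[OF x] norm_triangle_ineq[of a "Z x"] by simp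
    finally show "norm (F (a + Z x)) \<le> \<bar>F 0\<bar> + norm a + B" by simp
  qed
  show "(\<lambda>x. F (a + Z x)) \<in> borel_measurable M"
    using lip_meas[OF F] by measurable
qed

lemma lip_up: assumes F: "lip F" shows "lip (up F)"
  unfolding lip_def
proof (intro allI)
  fix a b :: 'b
  have "\<bar>up F a - up F b\<bar> = \<bar>\<integral>x. F (a + Z x) - F (b + Z x) \<partial>M\<bar>"
    unfolding up_def using up_int[OF F] by simp
  also have "\<dots> \<le> (\<integral>x. \<bar>F (a + Z x) - F (b + Z x)\<bar> \<partial>M)" by (rule integral_abs_bound)
  also have "\<dots> \<le> (\<integral>x. norm (a - b) \<partial>M)"
  proof (intro integral_mono)
    show "integrable M (\<lambda>x. \<bar>F (a + Z x) - F (b + Z x)\<bar>)"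
      using up_int[OF F] by auto
    show "\<bar>F (a + Z x) - F (b + Z x)\<bar> \<le> norm (a - b)" for x
      using F unfolding lip_def by (metis add_diff_cancel_right)
  qed simp
  also have "\<dots> = norm (a - b)" by (simp add: prob_space)
  finally show "\<bar>up F a - up F b\<bar> \<le> norm (a - b)" .
qed

lemma EE_Suc: assumes F: "lip F" shows "EE (Suc m) F = EE m (up F)"
proof -
  have "EE (Suc m) F = (\<integral>y. (\<integral>x. F (ps y m + Z x) \<partial>M) \<partial>PP m)"
  proof (rule rec_int[where K="\<bar>F 0\<bar> + Suc m * B"])
    show "F \<in> borel_measurable borel" by (rule lip_meas[OF F])
    show "\<bar>F a\<bar> \<le> \<bar>F 0\<bar> + Suc m * B" if "norm a \<le> Suc m * B" for a
      using lip_bound[OF F, of a] that by linarith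
  qed
  then show ?thesis unfolding EE_def up_def by simp
qed

lemma step_mgf:
  assumes F: "lip F" and l: "0 \<le> l" "l * (2 * B) < 3"
  shows "(\<integral>\<^sup>+x. ennreal (exp (l * (F (a + Z x) - up F a))) \<partial>M)
           \<le> ennreal (exp (l\<^sup>2 * (4 * vv) / (2 * (1 - l * (2 * B) / 3))))"
proof (rule mgf_bound)
  let ?D = "\<lambda>x. F (a + Z x) - up F a"
  have intF: "integrable M (\<lambda>x. F (a + Z x))" by (rule up_int[OF F])
  show "?D \<in> borel_measurable M" using lip_meas[OF F] by measurable
  have Db: "\<bar>?D x\<bar> \<le> norm (Z x) + mu" if x: "x \<in> space M" for x
  proof -
    have "?D x = (\<integral>x'. F (a + Z x) - F (a + Z x') \<partial>M)"
      using intF by (simp add: up_def prob_space)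
    also have "\<bar>\<dots>\<bar> \<le> (\<integral>x'. \<bar>F (a + Z x) - F (a + Z x')\<bar> \<partial>M)" by (rule integral_abs_bound)
    also have "\<dots> \<le> (\<integral>x'. norm (Z x) + norm (Z x') \<partial>M)"
    proof (intro integral_mono)
      show "integrable M (\<lambda>x'. \<bar>F (a + Z x) - F (a + Z x')\<bar>)" using intF by auto
      show "integrable M (\<lambda>x'. norm (Z x) + norm (Z x'))" using int_nZ by auto
      show "\<bar>F (a + Z x) - F (a + Z x')\<bar> \<le> norm (Z x) + norm (Z x')" for x'
        using F unfolding lip_def
        by (metis add_diff_cancel_left norm_triangle_ineq4 order_trans)
    qed
    also have "\<dots> = norm (Z x) + mu" using int_nZ by (simp add: mu_def prob_space)
    finally show ?thesis .
  qed
  show "\<bar>?D x\<bar> \<le> 2 * B" if "x \<in> space M" for x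
    using Db[OF that] Zb[OF that] mu_le_B by linarith
  show "expectation ?D = 0" using intF by (simp add: up_def prob_space)
  have "expectation (\<lambda>x. (?D x)\<^sup>2) \<le> expectation (\<lambda>x. (norm (Z x))\<^sup>2 + 2 * mu * norm (Z x) + mu\<^sup>2)"
  proof (intro integral_mono)
    show "integrable M (\<lambda>x. (?D x)\<^sup>2)"
    proof (intro integrable_const_bound[where B="(2 * B)\<^sup>2"])
      show "AE x in M. norm ((?D x)\<^sup>2) \<le> (2 * B)\<^sup>2"
      proof (intro AE_I2)
        fix x assume x: "x \<in> space M"
        have "\<bar>?D x\<bar> \<le> \<bar>2 * B\<bar>" using Db[OF x] Zb[OF x] mu_le_B by linarith
        then have "(?D x)\<^sup>2 \<le> (2 * B)\<^sup>2" by (simp only: abs_le_square_iff)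
        then show "norm ((?D x)\<^sup>2) \<le> (2 * B)\<^sup>2" by simp
      qed
      show "(\<lambda>x. (?D x)\<^sup>2) \<in> borel_measurable M" using lip_meas[OF F] by measurable
    qed
    show "integrable M (\<lambda>x. (norm (Z x))\<^sup>2 + 2 * mu * norm (Z x) + mu\<^sup>2)"
      using int_nZ int_nZ2 by auto
    show "(?D x)\<^sup>2 \<le> (norm (Z x))\<^sup>2 + 2 * mu * norm (Z x) + mu\<^sup>2" if "x \<in> space M" for x
    proof -
      have "\<bar>?D x\<bar> \<le> \<bar>norm (Z x) + mu\<bar>" using Db[OF that] mu_nonneg by simp
      then have "(?D x)\<^sup>2 \<le> (norm (Z x) + mu)\<^sup>2" by (simp only: abs_le_square_iff)
      then show ?thesis by (simp add: power2_sum algebra_simps)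
    qed
  qed
  also have "\<dots> = vv + 3 * mu\<^sup>2"
    using int_nZ int_nZ2 by (simp add: vv_def mu_def prob_space power2_eq_square)
  also have "\<dots> \<le> 4 * vv" using mu2_le_vv by simp
  finally show "expectation (\<lambda>x. (?D x)\<^sup>2) \<le> 4 * vv" .
qed (use l in auto)

end


lemma chernoff_alg:
  fixes S c t e l :: real
  assumes S: "S > 0" and c: "c > 0" and t: "t > 0"
    and e: "e = sqrt (2 * S * t) + 2 * c * t / 3"
    and l: "l = e / (S + c * e / 3)"
  shows "0 \<le> l" "l * c < 3" "S * (l\<^sup>2 / (2 * (1 - l * c / 3))) - l * e \<le> - t"
proof -
  define D where "D = S + c * e / 3"
  have "0 \<le> sqrt (2 * S * t)" using S t by simp
  moreover have "0 < 2 * c * t / 3" using c t by simp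
  ultimately have e0: "e > 0" using e by linarith
  have D: "D > 0" using S c e0 unfolding D_def by (simp add: add_pos_nonneg)
  show "0 \<le> l" using l e0 D D_def by simp
  have lc: "l * c = c * e / D" using l D_def by simp
  show "l * c < 3" using lc D S unfolding D_def by (simp add: divide_less_eq)
  have one: "1 - l * c / 3 = S / D" using lc D by (simp add: D_def field_simps)
  have lD: "l * D = e" using l D D_def by simp
  have "S * (l\<^sup>2 / (2 * (1 - l * c / 3))) = S * (l\<^sup>2 / (2 * (S / D)))"
    by (simp only: one)
  also have "\<dots> = l\<^sup>2 * D / 2"
    using S D by (simp add: field_simps)
  also have "\<dots> = l * e / 2" using lD by (simp add: power2_eq_square)
  finally have X0: "S * (l\<^sup>2 / (2 * (1 - l * c / 3))) = l * e / 2" .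
  have X: "S * (l\<^sup>2 / (2 * (1 - l * c / 3))) - l * e = - (l * e / 2)" using X0 by linarith
  have "l = e / D" using lD D by (simp add: field_simps)
  then have "l * e / 2 = e\<^sup>2 / (2 * D)" by (simp add: power2_eq_square)
  then have eq: "S * (l\<^sup>2 / (2 * (1 - l * c / 3))) - l * e = - (e\<^sup>2 / (2 * D))" using X by simp
  define p where "p = sqrt (2 * S * t)"
  define q where "q = 2 * c * t / 3"
  have p2: "p\<^sup>2 = 2 * S * t" using S t unfolding p_def by simp
  have pq: "0 \<le> p * q" using c t S unfolding p_def q_def by simp
  have epq: "e = p + q" using e p_def q_def by simp
  have "2 * t * D = p\<^sup>2 + q * e" using p2 unfolding D_def q_def by (simp add: algebra_simps)
  also have "\<dots> \<le> e\<^sup>2" using pq epq by (simp add: power2_sum algebra_simps power2_eq_square)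
  finally have "t \<le> e\<^sup>2 / (2 * D)" using D by (simp add: field_simps)
  then show "S * (l\<^sup>2 / (2 * (1 - l * c / 3))) - l * e \<le> - t" using eq by simp
qed

context vb begin

lemma EE_0: fixes F :: "'b \<Rightarrow> real" shows "EE 0 F = F 0"
proof -
  interpret P0: prob_space "PP 0" by (rule prob_PP)
  show ?thesis unfolding EE_def ps_def using prob_space.prob_space[OF prob_PP, of 0] by simp
qed

lemma mgf_ind:
  assumes l: "0 \<le> l" "l * (2 * B) < 3"
  shows "lip F \<Longrightarrow> (\<integral>\<^sup>+y. ennreal (exp (l * (F (ps y m) - EE m F))) \<partial>PP m)
      \<le> ennreal (exp (real m * (l\<^sup>2 * (4 * vv) / (2 * (1 - l * (2 * B) / 3)))))"
proof (induction m arbitrary: F)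
  case 0
  interpret P0: prob_space "PP 0" by (rule prob_PP)
  have "(\<integral>\<^sup>+y. ennreal (exp (l * (F (ps y 0) - EE 0 F))) \<partial>PP 0) = (\<integral>\<^sup>+y. 1 \<partial>PP 0)"
    by (intro nn_integral_cong) (simp add: EE_0 ps_def)
  also have "\<dots> = 1" by (simp add: P0.emeasure_space_1)
  finally show ?case by simp
next
  case (Suc m)
  define phi where "phi = l\<^sup>2 * (4 * vv) / (2 * (1 - l * (2 * B) / 3))"
  have F: "lip F" by fact
  note Fm[measurable] = lip_meas[OF F]
  have upm[measurable]: "up F \<in> borel_measurable borel" by (rule lip_meas[OF lip_up[OF F]])
  have E: "EE (Suc m) F = EE m (up F)" by (rule EE_Suc[OF F])
  let ?c = "EE m (up F)"
  have "(\<integral>\<^sup>+y. ennreal (exp (l * (F (ps y (Suc m)) - EE (Suc m) F))) \<partial>PP (Suc m))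
      = (\<integral>\<^sup>+y. (\<integral>\<^sup>+x. ennreal (exp (l * (F (ps y m + Z x) - ?c))) \<partial>M) \<partial>PP m)"
    unfolding E by (rule rec_nn) measurable
  also have "\<dots> \<le> (\<integral>\<^sup>+y. ennreal (exp phi) * ennreal (exp (l * (up F (ps y m) - ?c))) \<partial>PP m)"
  proof (intro nn_integral_mono)
    fix y
    let ?b = "ps y m"
    have "(\<integral>\<^sup>+x. ennreal (exp (l * (F (?b + Z x) - ?c))) \<partial>M)
        = (\<integral>\<^sup>+x. ennreal (exp (l * (F (?b + Z x) - up F ?b))) * ennreal (exp (l * (up F ?b - ?c))) \<partial>M)"
      by (intro nn_integral_cong) (simp add: ennreal_mult'[symmetric] exp_add[symmetric] algebra_simps)
    also have "\<dots> = (\<integral>\<^sup>+x. ennreal (exp (l * (F (?b + Z x) - up F ?b))) \<partial>M) * ennreal (exp (l * (up F ?b - ?c)))"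
      by (rule nn_integral_multc) measurable
    also have "\<dots> \<le> ennreal (exp phi) * ennreal (exp (l * (up F ?b - ?c)))"
      using step_mgf[OF F l, of ?b] unfolding phi_def by (intro mult_right_mono) auto
    finally show "(\<integral>\<^sup>+x. ennreal (exp (l * (F (?b + Z x) - ?c))) \<partial>M)
        \<le> ennreal (exp phi) * ennreal (exp (l * (up F ?b - ?c)))" .
  qed
  also have "\<dots> = ennreal (exp phi) * (\<integral>\<^sup>+y. ennreal (exp (l * (up F (ps y m) - ?c))) \<partial>PP m)"
    by (rule nn_integral_cmult) measurable
  also have "\<dots> \<le> ennreal (exp phi) * ennreal (exp (real m * phi))"
    using Suc.IH[OF lip_up[OF F]] unfolding phi_def by (intro mult_left_mono) auto
  also have "\<dots> = ennreal (exp (real (Suc m) * phi))"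
    by (simp add: ennreal_mult'[symmetric] exp_add[symmetric] algebra_simps)
  finally show ?case unfolding phi_def .
qed

end


context vb begin

lemma int_PP_bounded:
  fixes F :: "'b \<Rightarrow> real"
  assumes [measurable]: "F \<in> borel_measurable borel"
    and Fb: "\<And>a. norm a \<le> real m * B \<Longrightarrow> \<bar>F a\<bar> \<le> K"
  shows "integrable (PP m) (\<lambda>y. F (ps y m))"
proof -
  interpret P: prob_space "PP m" by (rule prob_PP)
  show ?thesis
    by (intro P.integrable_const_bound[where B=K]) (auto intro!: AE_I2 Fb ps_bound)
qed

lemma second_moment:
  assumes EZ: "integral\<^sup>L M Z = 0"
  shows "EE m (\<lambda>a. (norm (s + a))\<^sup>2) = (norm s)\<^sup>2 + real m * vv"
proof (induction m arbitrary: s)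
  case 0
  show ?case by (simp add: EE_0)
next
  case (Suc m)
  have inner: "(\<integral>x. (norm (p + Z x))\<^sup>2 \<partial>M) = (norm p)\<^sup>2 + vv" for p
  proof -
    have "(norm (p + Z x))\<^sup>2 = (norm p)\<^sup>2 + 2 * (p \<bullet> Z x) + (norm (Z x))\<^sup>2" for x
      by (simp add: power2_norm_eq_inner inner_add_left inner_add_right inner_commute)
    then have "(\<integral>x. (norm (p + Z x))\<^sup>2 \<partial>M) = (\<integral>x. (norm p)\<^sup>2 + 2 * (p \<bullet> Z x) + (norm (Z x))\<^sup>2 \<partial>M)"
      by simp
    also have "\<dots> = (norm p)\<^sup>2 + 2 * (p \<bullet> integral\<^sup>L M Z) + vv"
      using intZ int_nZ2 by (simp add: prob_space vv_def)
    finally show ?thesis using EZ by simp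
  qed
  have "EE (Suc m) (\<lambda>a. (norm (s + a))\<^sup>2) = (\<integral>y. (\<integral>x. (norm (s + (ps y m + Z x)))\<^sup>2 \<partial>M) \<partial>PP m)"
  proof (rule rec_int[where K="(norm s + Suc m * B)\<^sup>2"])
    show "(\<lambda>a. (norm (s + a))\<^sup>2) \<in> borel_measurable borel" by measurable
    show "\<bar>(norm (s + a))\<^sup>2\<bar> \<le> (norm s + Suc m * B)\<^sup>2" if "norm a \<le> Suc m * B" for a
      using that norm_triangle_ineq[of s a] by (auto intro!: power_mono)
  qed
  also have "\<dots> = (\<integral>y. (norm (s + ps y m))\<^sup>2 + vv \<partial>PP m)"
    by (simp add: add.assoc[symmetric] inner)
  also have "\<dots> = EE m (\<lambda>a. (norm (s + a))\<^sup>2) + vv"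
  proof -
    interpret P: prob_space "PP m" by (rule prob_PP)
    have "integrable (PP m) (\<lambda>y. (norm (s + ps y m))\<^sup>2)"
    proof (rule int_PP_bounded[where K="(norm s + m * B)\<^sup>2"])
      show "(\<lambda>a. (norm (s + a))\<^sup>2) \<in> borel_measurable borel" by measurable
      show "\<bar>(norm (s + a))\<^sup>2\<bar> \<le> (norm s + m * B)\<^sup>2" if "norm a \<le> m * B" for a
        using that norm_triangle_ineq[of s a] by (auto intro!: power_mono)
    qed
    then show ?thesis unfolding EE_def by (simp add: P.prob_space)
  qed
  finally show ?case using Suc.IH[of s] by (simp add: distrib_right)
qed

lemma first_moment:
  assumes EZ: "integral\<^sup>L M Z = 0"
  shows "EE m norm \<le> sqrt (real m * vv)"
proof -
  interpret P: prob_space "PP m" by (rule prob_PP)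
  have i1: "integrable (PP m) (\<lambda>y. norm (ps y m))"
    by (rule int_PP_bounded[where K="m * B"]) auto
  have i2: "integrable (PP m) (\<lambda>y. (norm (ps y m))\<^sup>2)"
  proof (rule int_PP_bounded[where K="(m * B)\<^sup>2" and F="\<lambda>a. (norm a)\<^sup>2"])
    show "\<bar>(norm a)\<^sup>2\<bar> \<le> (m * B)\<^sup>2" if "norm a \<le> m * B" for a :: 'b
      using that by (auto intro!: power_mono)
  qed measurable
  have "(EE m norm)\<^sup>2 \<le> EE m (\<lambda>a. (norm (0 + a))\<^sup>2)"
    using P.variance_eq[OF i1 i2] P.variance_positive[of "\<lambda>y. norm (ps y m)"]
    unfolding EE_def by simp
  also have "\<dots> = real m * vv" using second_moment[OF EZ, of m 0] by simp
  finally have "(EE m norm)\<^sup>2 \<le> real m * vv" .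
  then show ?thesis by (simp add: real_le_rsqrt)
qed

end


context vb begin

lemma lip_norm: "lip norm"
  unfolding lip_def by (simp add: norm_triangle_ineq3)

lemma vb_main:
  assumes EZ: "integral\<^sup>L M Z = 0" and n: "n > 0" and t: "t > 0"
  shows "measure (PP n) {y \<in> space (PP n). norm (ps y n) \<le> sqrt (real n * vv) + sqrt (8 * real n * vv * t) + 4 * B * t / 3}
           \<ge> 1 - exp (- t)"
proof -
  interpret P: prob_space "PP n" by (rule prob_PP)
  define bd where "bd = sqrt (real n * vv) + sqrt (8 * real n * vv * t) + 4 * B * t / 3"
  have vv0: "0 \<le> vv" unfolding vv_def by simp
  have bd0: "0 \<le> bd" unfolding bd_def using vv0 B_nonneg t by simp
  have Aev: "{y \<in> space (PP n). norm (ps y n) \<le> bd} \<in> sets (PP n)" by measurable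
  show ?thesis
  proof (cases "vv = 0")
    case True
    have "AE x in M. (norm (Z x))\<^sup>2 = 0"
      using integral_nonneg_eq_0_iff_AE[OF int_nZ2] True unfolding vv_def by simp
    then have AEZ: "AE x in M. Z x = 0" by (rule eventually_mono) simp
    have "AE y in PP n. \<forall>j\<in>{..<n}. Z (y j) = 0"
    proof (intro eventually_ball_finite ballI)
      fix j assume "j \<in> {..<n}"
      then show "AE y in PP n. Z (y j) = 0" unfolding PP_def
        by (intro AE_PiM_component[where P="\<lambda>x. Z x = 0"] AEZ prob_space_axioms) auto
    qed simp
    then have "AE y in PP n. norm (ps y n) \<le> bd"
      by (rule eventually_mono) (simp add: ps_def bd0)
    then have "measure (PP n) {y \<in> space (PP n). norm (ps y n) \<le> bd} = 1"
      using P.prob_Collect_eq_1[OF Aev] by simp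
    then show ?thesis unfolding bd_def by simp
  next
    case False
    then have vvp: "vv > 0" using vv0 by simp
    have Bp: "B > 0"
    proof (rule ccontr)
      assume "\<not> B > 0"
      then have "B = 0" using B_nonneg by simp
      then show False using vv_le vvp by simp
    qed
    define S where "S = real n * (4 * vv)"
    define c where "c = 2 * B"
    define e where "e = sqrt (2 * S * t) + 2 * c * t / 3"
    define l where "l = e / (S + c * e / 3)"
    have Sp: "S > 0" using n vvp unfolding S_def by simp
    have cp: "c > 0" using Bp unfolding c_def by simp
    note alg = chernoff_alg[OF Sp cp t e_def l_def]
    have e_eq: "e = sqrt (8 * real n * vv * t) + 4 * B * t / 3"
      unfolding e_def S_def c_def by (simp add: algebra_simps)
    define Ev where "Ev = EE n norm"
    have Ev: "Ev \<le> sqrt (real n * vv)" unfolding Ev_def by (rule first_moment[OF EZ])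
    define T where "T = {y \<in> space (PP n). Ev + e < norm (ps y n)}"
    have Tm: "T \<in> sets (PP n)" unfolding T_def by measurable
    have mgf: "(\<integral>\<^sup>+y. ennreal (exp (l * (norm (ps y n) - Ev))) \<partial>PP n)
        \<le> ennreal (exp (real n * (l\<^sup>2 * (4 * vv) / (2 * (1 - l * (2 * B) / 3)))))"
    proof -
      have l2: "l * (2 * B) < 3" using alg(2) c_def by simp
      show ?thesis unfolding Ev_def by (rule mgf_ind[OF alg(1) l2 lip_norm])
    qed
    have nphi: "real n * (l\<^sup>2 * (4 * vv) / (2 * (1 - l * (2 * B) / 3))) = S * (l\<^sup>2 / (2 * (1 - l * c / 3)))"
      unfolding S_def c_def by simp
    have "emeasure (PP n) T = (\<integral>\<^sup>+y. indicator T y \<partial>PP n)" using Tm by simp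
    also have "\<dots> \<le> (\<integral>\<^sup>+y. ennreal (exp (l * (norm (ps y n) - Ev))) * ennreal (exp (- l * e)) \<partial>PP n)"
    proof (intro nn_integral_mono)
      fix y
      show "indicator T y \<le> ennreal (exp (l * (norm (ps y n) - Ev))) * ennreal (exp (- l * e))"
      proof (cases "y \<in> T")
        case True
        then have "0 \<le> norm (ps y n) - Ev - e" unfolding T_def by simp
        then have "0 \<le> l * (norm (ps y n) - Ev - e)" using alg(1) by simp
        then have "0 \<le> l * (norm (ps y n) - Ev) + - l * e" by (simp add: algebra_simps)
        then have "1 \<le> exp (l * (norm (ps y n) - Ev) + - l * e)" by simp
        then show ?thesis using True by (simp add: ennreal_mult'[symmetric] exp_add[symmetric])
      qed simp
    qed
    also have "\<dots> = (\<integral>\<^sup>+y. ennreal (exp (l * (norm (ps y n) - Ev))) \<partial>PP n) * ennreal (exp (- l * e))"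
      by (rule nn_integral_multc) measurable
    also have "\<dots> \<le> ennreal (exp (S * (l\<^sup>2 / (2 * (1 - l * c / 3))))) * ennreal (exp (- l * e))"
      using mgf nphi by (intro mult_right_mono) auto
    also have "\<dots> = ennreal (exp (S * (l\<^sup>2 / (2 * (1 - l * c / 3))) - l * e))"
      by (simp add: ennreal_mult'[symmetric] exp_add[symmetric])
    also have "\<dots> \<le> ennreal (exp (- t))"
      using alg(3) by (intro ennreal_leI) simp
    finally have "measure (PP n) T \<le> exp (- t)"
      using P.emeasure_eq_measure by (simp add: ennreal_le_iff)
    moreover have "measure (PP n) (space (PP n) - T) = 1 - measure (PP n) T"
      by (rule P.prob_compl[OF Tm])
    moreover have "space (PP n) - T \<subseteq> {y \<in> space (PP n). norm (ps y n) \<le> bd}"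
      using Ev unfolding T_def bd_def e_eq by auto
    then have "measure (PP n) (space (PP n) - T) \<le> measure (PP n) {y \<in> space (PP n). norm (ps y n) \<le> bd}"
      by (intro P.finite_measure_mono Aev)
    ultimately show ?thesis unfolding bd_def by linarith
  qed
qed

end


lemma sym_dot: fixes A :: "real^'n^'n" assumes "transpose A = A"
  shows "(A *v x) \<bullet> y = x \<bullet> (A *v y)"
  by (metis assms dot_lmul_matrix transpose_matrix_vector)

lemma quad_expand:
  fixes A :: "real^'n^'n" assumes sym: "transpose A = A"
  shows "(u + e *\<^sub>R w) \<bullet> (A *v (u + e *\<^sub>R w))
       = u \<bullet> (A *v u) + 2 * e * (w \<bullet> (A *v u)) + e\<^sup>2 * (w \<bullet> (A *v w))"
proof -
  have "u \<bullet> (A *v w) = w \<bullet> (A *v u)"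
    using sym_dot[OF sym, of u w] by (simp add: inner_commute)
  then show ?thesis
    by (simp add: matrix_vector_right_distrib matrix_vector_mult_scaleR inner_add_left inner_add_right
        power2_eq_square algebra_simps)
qed

lemma matrix_inv_eq:
  fixes A B :: "real^'n^'n"
  assumes "A ** B = mat 1"
  shows "matrix_inv A = B"
proof -
  have BA: "B ** A = mat 1" using assms matrix_left_right_inverse by blast
  have "\<exists>A'. A ** A' = mat 1 \<and> A' ** A = mat 1" using assms BA by blast
  then have *: "A ** matrix_inv A = mat 1 \<and> matrix_inv A ** A = mat 1"
    unfolding matrix_inv_def by (rule someI_ex)
  have "matrix_inv A = matrix_inv A ** (A ** B)" using assms by simp
  also have "\<dots> = (matrix_inv A ** A) ** B" by (simp add: matrix_mul_assoc)
  also have "\<dots> = B" using * by simp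
  finally show ?thesis .
qed

lemma eig_basis:
  fixes A :: "real^'n^'n" assumes sym: "transpose A = A"
  shows "subspace V \<Longrightarrow> (\<forall>x\<in>V. A *v x \<in> V) \<Longrightarrow>
    \<exists>U. U \<subseteq> V \<and> pairwise orthogonal U \<and> (\<forall>u\<in>U. norm u = 1 \<and> A *v u = (u \<bullet> (A *v u)) *\<^sub>R u) \<and> V \<subseteq> span U"
proof (induction "dim V" arbitrary: V rule: less_induct)
  case less
  note sub = less.prems(1) and inv = less.prems(2)
  show ?case
  proof (cases "V \<subseteq> {0}")
    case True then show ?thesis by (intro exI[of _ "{}"]) auto
  next
    case False
    then obtain x0 where x0: "x0 \<in> V" "x0 \<noteq> 0" by auto
    let ?K = "sphere 0 1 \<inter> V"
    let ?q = "\<lambda>y. y \<bullet> (A *v y)"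
    have cK: "compact ?K" using closed_subspace[OF sub] compact_sphere by (intro compact_Int_closed)
    have "x0 /\<^sub>R norm x0 \<in> ?K" using x0 sub by (auto simp: subspace_scale)
    then have neK: "?K \<noteq> {}" by blast
    have cont: "continuous_on ?K ?q"
      by (intro continuous_intros)
    obtain u where u: "u \<in> ?K" and umax: "\<And>y. y \<in> ?K \<Longrightarrow> ?q y \<le> ?q u"
      using continuous_attains_sup[OF cK neK cont] by blast
    have uV: "u \<in> V" and u1: "norm u = 1" using u by auto
    have uu: "u \<bullet> u = 1" using u1 by (simp add: dot_square_norm)
    define lam where "lam = ?q u"
    have maxp: "?q y \<le> lam * (norm y)\<^sup>2" if y: "y \<in> V" for y
    proof (cases "y = 0")
      case True then show ?thesis by simp
    next
      case False
      then have "y /\<^sub>R norm y \<in> ?K" using y sub by (auto simp: subspace_scale)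
      then have "?q (y /\<^sub>R norm y) \<le> lam" using umax lam_def by blast
      moreover have "?q (y /\<^sub>R norm y) = ?q y / (norm y)\<^sup>2"
        by (simp add: matrix_vector_mult_scaleR power2_eq_square divide_inverse)
      ultimately show ?thesis using False by (simp add: divide_le_eq mult.commute)
    qed
    define w where "w = A *v u - lam *\<^sub>R u"
    have wV: "w \<in> V" unfolding w_def using inv uV sub by (simp add: subspace_diff subspace_scale)
    have wu: "w \<bullet> u = 0"
    unfolding w_def lam_def using uu by (simp add: inner_diff_left inner_diff_right inner_commute)
    have wAu: "w \<bullet> (A *v u) = (norm w)\<^sup>2"
    proof -
      have "A *v u = w + lam *\<^sub>R u" unfolding w_def by simp
      then show ?thesis by (simp add: inner_add_right wu power2_norm_eq_inner)
    qed
    have w0: "w = 0"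
    proof (rule ccontr)
      assume "w \<noteq> 0"
      define a where "a = (norm w)\<^sup>2"
      have a: "a > 0" using \<open>w \<noteq> 0\<close> unfolding a_def by simp
      define K0 where "K0 = lam * a - ?q w"
      define e where "e = a / (\<bar>K0\<bar> + 1)"
      have e: "e > 0" using a unfolding e_def by simp
      have vV: "u + e *\<^sub>R w \<in> V" using uV wV sub by (simp add: subspace_add subspace_scale)
      have nv: "(norm (u + e *\<^sub>R w))\<^sup>2 = 1 + e\<^sup>2 * a"
        unfolding a_def power2_norm_eq_inner
        using uu wu by (simp add: inner_add_left inner_add_right inner_commute power2_eq_square algebra_simps)
      have "lam + 2 * e * a + e\<^sup>2 * ?q w \<le> lam * (1 + e\<^sup>2 * a)"
        using maxp[OF vV] unfolding quad_expand[OF sym] nv lam_def[symmetric] wAu a_def[symmetric] .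
      then have "2 * e * a \<le> e\<^sup>2 * K0" unfolding K0_def by (simp add: algebra_simps)
      then have "2 * a \<le> e * K0" using e by (simp add: power2_eq_square)
      also have "\<dots> \<le> e * \<bar>K0\<bar>" using e by (intro mult_left_mono) auto
      also have "\<dots> < a" unfolding e_def using a
        by (simp add: divide_less_eq field_simps)
      finally show False using a by simp
    qed
    then have eig: "A *v u = lam *\<^sub>R u" unfolding w_def by simp
    define V' where "V' = {x \<in> V. x \<bullet> u = 0}"
    have sub': "subspace V'" unfolding V'_def subspace_def using sub
      by (auto simp: subspace_0 subspace_add subspace_scale inner_add_left)
    have inv': "\<forall>x\<in>V'. A *v x \<in> V'"
    proof
      fix x assume x: "x \<in> V'"
      have "(A *v x) \<bullet> u = x \<bullet> (A *v u)" by (rule sym_dot[OF sym])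
      also have "\<dots> = 0" using x eig by (simp add: V'_def)
      finally show "A *v x \<in> V'" using x inv by (simp add: V'_def)
    qed
    have "u \<notin> V'" using uu by (simp add: V'_def)
    moreover have "V' \<subseteq> V" unfolding V'_def by auto
    ultimately have "V' \<subset> V" using uV by blast
    moreover have "span V' = V'" "span V = V" using sub sub' by (simp_all add: span_eq_iff)
    ultimately have "span V' \<subset> span V" by (simp del: span_eq_iff)
    then have "dim V' < dim V" by (rule dim_psubset)
    from less.hyps[OF this sub' inv'] obtain U' where U':
      "U' \<subseteq> V'" "pairwise orthogonal U'"
      "\<forall>u\<in>U'. norm u = 1 \<and> A *v u = (u \<bullet> (A *v u)) *\<^sub>R u" "V' \<subseteq> span U'" by blast
    show ?thesis
    proof (intro exI[of _ "insert u U'"] conjI)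
      show "insert u U' \<subseteq> V" using U'(1) uV unfolding V'_def by auto
      show "pairwise orthogonal (insert u U')"
        using U'(1,2) unfolding pairwise_insert V'_def orthogonal_def by (auto simp: inner_commute)
      show "\<forall>v\<in>insert u U'. norm v = 1 \<and> A *v v = (v \<bullet> (A *v v)) *\<^sub>R v"
        using U'(3) u1 eig lam_def by auto
      show "V \<subseteq> span (insert u U')"
      proof
        fix z assume z: "z \<in> V"
        have "z - (z \<bullet> u) *\<^sub>R u \<in> V'"
          unfolding V'_def using z uV sub uu by (simp add: subspace_diff subspace_scale inner_diff_left)
        then have "z - (z \<bullet> u) *\<^sub>R u \<in> span U'" using U'(4) by blast
        then show "z \<in> span (insert u U')" by (auto simp: span_breakdown_eq)
      qed
    qed
  qed
qed


lemma mv_sum: fixes A :: "real^'n^'m"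
  shows "A *v (\<Sum>u\<in>S. f u) = (\<Sum>u\<in>S. A *v f u)"
  by (induction S rule: infinite_finite_induct) (auto simp: matrix_vector_right_distrib)

locale onb =
  fixes U :: "(real^'n) set"
  assumes fin: "finite U" and orth: "pairwise orthogonal U"
    and unit: "\<And>u. u \<in> U \<Longrightarrow> norm u = 1" and spanU: "span U = UNIV"
begin

definition fc :: "(real^'n \<Rightarrow> real) \<Rightarrow> real^'n^'n" where
  "fc g = (\<chi> i j. \<Sum>u\<in>U. g u * u$i * u$j)"

lemma uu: "u \<in> U \<Longrightarrow> u \<bullet> u = 1"
  using unit by (simp add: dot_square_norm)

lemma uv: "u \<in> U \<Longrightarrow> v \<in> U \<Longrightarrow> u \<noteq> v \<Longrightarrow> u \<bullet> v = 0"
  using orth unfolding pairwise_def orthogonal_def by blast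

lemma expand: "(\<Sum>u\<in>U. (u \<bullet> x) *\<^sub>R u) = x"
  using orthonormal_basis_expand[OF orth unit _ fin, of x] spanU by (simp add: inner_commute)

lemma inner_sum_U: assumes v: "v \<in> U" shows "v \<bullet> (\<Sum>u\<in>U. c u *\<^sub>R u) = c v"
proof -
  have "v \<bullet> (\<Sum>u\<in>U. c u *\<^sub>R u) = (\<Sum>u\<in>U. c u * (v \<bullet> u))"
    by (simp add: inner_sum_right)
  also have "\<dots> = c v * (v \<bullet> v) + (\<Sum>u\<in>U - {v}. c u * (v \<bullet> u))"
    using fin v by (simp add: sum.remove)
  also have "(\<Sum>u\<in>U - {v}. c u * (v \<bullet> u)) = 0"
    using v uv by (intro sum.neutral) auto
  finally show ?thesis using uu[OF v] by simp
qed

lemma fc_mult: "fc g *v x = (\<Sum>u\<in>U. (g u * (u \<bullet> x)) *\<^sub>R u)"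
proof -
  have "(fc g *v x) $ i = (\<Sum>u\<in>U. (g u * (u \<bullet> x)) *\<^sub>R u) $ i" for i
  proof -
    have "(fc g *v x) $ i = (\<Sum>j\<in>UNIV. \<Sum>u\<in>U. g u * u$i * u$j * x$j)"
      by (simp add: fc_def matrix_vector_mult_def sum_distrib_right)
    also have "\<dots> = (\<Sum>u\<in>U. \<Sum>j\<in>UNIV. g u * u$i * (u$j * x$j))"
      by (subst sum.swap) (simp add: mult.assoc)
    also have "\<dots> = (\<Sum>u\<in>U. g u * u$i * (u \<bullet> x))"
      by (simp add: inner_vec_def sum_distrib_left)
    also have "\<dots> = (\<Sum>u\<in>U. (g u * (u \<bullet> x)) *\<^sub>R u) $ i"
      by (simp add: sum_component algebra_simps)
    finally show ?thesis .
  qed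
  then show ?thesis by (simp add: vec_eq_iff)
qed

lemma fc_inner: "v \<in> U \<Longrightarrow> v \<bullet> (fc g *v x) = g v * (v \<bullet> x)"
  by (simp add: fc_mult inner_sum_U)

lemma fc_cong: "(\<And>u. u \<in> U \<Longrightarrow> f u = g u) \<Longrightarrow> fc f = fc g"
  unfolding fc_def by (simp add: vec_eq_iff)

lemma fc_comp: "fc f ** fc g = fc (\<lambda>u. f u * g u)"
proof -
  have "(fc f ** fc g) *v x = fc (\<lambda>u. f u * g u) *v x" for x
  proof -
    have "(fc f ** fc g) *v x = fc f *v (fc g *v x)" by (simp add: matrix_vector_mul_assoc)
    also have "\<dots> = (\<Sum>u\<in>U. (f u * (g u * (u \<bullet> x))) *\<^sub>R u)"
      by (simp add: fc_mult[of f] fc_inner)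
    also have "\<dots> = fc (\<lambda>u. f u * g u) *v x" by (simp add: fc_mult mult.assoc)
    finally show ?thesis .
  qed
  then show ?thesis by (simp add: matrix_eq)
qed

lemma fc_one: "fc (\<lambda>_. 1) = mat 1"
  by (simp add: matrix_eq fc_mult expand)

lemma fc_transpose: "transpose (fc g) = fc g"
  by (simp add: fc_def transpose_def vec_eq_iff mult.commute mult.left_commute)

lemma fc_quad: "x \<bullet> (fc g *v x) = (\<Sum>u\<in>U. g u * (u \<bullet> x)\<^sup>2)"
  by (simp add: fc_mult inner_sum_right inner_commute power2_eq_square mult.assoc)

lemma exists_nonorth: "x \<noteq> 0 \<Longrightarrow> \<exists>u\<in>U. u \<bullet> x \<noteq> 0"
  using expand[of x] by (metis (no_types, lifting) scale_eq_0_iff sum.neutral)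

lemma fc_posdef: assumes "\<And>u. u \<in> U \<Longrightarrow> g u > 0" shows "posdef (fc g)"
  unfolding posdef_def
proof (intro conjI allI impI fc_transpose)
  fix x :: "real^'n" assume "x \<noteq> 0"
  then obtain v where v: "v \<in> U" "v \<bullet> x \<noteq> 0" using exists_nonorth by blast
  show "0 < x \<bullet> (fc g *v x)" unfolding fc_quad
    using v assms fin by (intro sum_pos2[of U v]) (auto simp: less_imp_le)
qed

lemma fc_eig: assumes "\<And>u. u \<in> U \<Longrightarrow> A *v u = lam u *\<^sub>R u" shows "A = fc lam"
proof -
  have "A *v x = fc lam *v x" for x
  proof -
    have "A *v x = A *v (\<Sum>u\<in>U. (u \<bullet> x) *\<^sub>R u)" by (simp add: expand)
    also have "\<dots> = (\<Sum>u\<in>U. (u \<bullet> x) *\<^sub>R (A *v u))" by (simp add: mv_sum matrix_vector_mult_scaleR)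
    also have "\<dots> = fc lam *v x" using assms by (simp add: fc_mult mult.commute)
    finally show ?thesis .
  qed
  then show ?thesis by (simp add: matrix_eq)
qed

lemma fc_inv: assumes "\<And>u. u \<in> U \<Longrightarrow> g u \<noteq> 0" shows "matrix_inv (fc g) = fc (\<lambda>u. 1 / g u)"
proof (rule matrix_inv_eq)
  have "fc g ** fc (\<lambda>u. 1 / g u) = fc (\<lambda>_. 1)" unfolding fc_comp using assms by (intro fc_cong) simp
  then show "fc g ** fc (\<lambda>u. 1 / g u) = mat 1" by (simp add: fc_one)
qed

lemma sqrt_unique:
  assumes eig: "\<And>u. u \<in> U \<Longrightarrow> A *v u = lam u *\<^sub>R u" and pos: "\<And>u. u \<in> U \<Longrightarrow> lam u > 0"
    and B: "posdef B" "B ** B = A"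
  shows "B = fc (\<lambda>u. sqrt (lam u))"
proof (rule fc_eig)
  fix u assume u: "u \<in> U"
  define s where "s = sqrt (lam u)"
  have s: "s > 0" "s * s = lam u" using pos[OF u] unfolding s_def by auto
  define y where "y = B *v u - s *\<^sub>R u"
  have "B *v y + s *\<^sub>R y = (B ** B) *v u - (s * s) *\<^sub>R u"
    unfolding y_def by (simp add: matrix_vector_mult_diff_distrib matrix_vector_mult_scaleR
        matrix_vector_mul_assoc algebra_simps)
  also have "\<dots> = 0" using B(2) eig[OF u] s by simp
  finally have "B *v y = - (s *\<^sub>R y)" by (simp add: eq_neg_iff_add_eq_0)
  then have yBy: "y \<bullet> (B *v y) = - s * (y \<bullet> y)" by simp
  have "y = 0"
  proof (rule ccontr)
    assume "y \<noteq> 0"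
    then have "0 < y \<bullet> (B *v y)" using B(1) unfolding posdef_def by blast
    moreover have "0 \<le> s * (y \<bullet> y)" using s by simp
    ultimately show False using yBy by simp
  qed
  then show "B *v u = sqrt (lam u) *\<^sub>R u" unfolding y_def s_def by simp
qed

lemma mat_sqrt_fc:
  assumes eig: "\<And>u. u \<in> U \<Longrightarrow> A *v u = lam u *\<^sub>R u" and pos: "\<And>u. u \<in> U \<Longrightarrow> lam u > 0"
  shows "mat_sqrt A = fc (\<lambda>u. sqrt (lam u))"
  unfolding mat_sqrt_def
proof (rule the_equality)
  have "fc (\<lambda>u. sqrt (lam u)) ** fc (\<lambda>u. sqrt (lam u)) = fc lam"
    unfolding fc_comp using pos by (intro fc_cong) (simp add: less_imp_le)
  also have "\<dots> = A" using fc_eig[OF eig] by simp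
  finally show "posdef (fc (\<lambda>u. sqrt (lam u))) \<and> fc (\<lambda>u. sqrt (lam u)) ** fc (\<lambda>u. sqrt (lam u)) = A"
    using pos by (auto intro!: fc_posdef)
  show "\<And>B. posdef B \<and> B ** B = A \<Longrightarrow> B = fc (\<lambda>u. sqrt (lam u))"
    using sqrt_unique[OF eig pos] by blast
qed

end

lemma posdef_decomp:
  fixes A :: "real^'n^'n"
  assumes A: "posdef A"
  shows "\<exists>U lam. onb U \<and> (\<forall>u\<in>U. A *v u = lam u *\<^sub>R u \<and> lam u > 0)"
proof -
  have sym: "transpose A = A" using A unfolding posdef_def by blast
  obtain U where U: "pairwise orthogonal U" "\<forall>u\<in>U. norm u = 1 \<and> A *v u = (u \<bullet> (A *v u)) *\<^sub>R u"
      "UNIV \<subseteq> span U"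
    using eig_basis[OF sym, of UNIV] by auto
  have "onb U"
    using U pairwise_orthogonal_imp_finite[OF U(1)] by unfold_locales auto
  moreover have "u \<bullet> (A *v u) > 0" if "u \<in> U" for u
    using A U(2) that unfolding posdef_def by (metis norm_zero zero_neq_one)
  ultimately show ?thesis using U(2) by (intro exI[of _ U] exI[of _ "\<lambda>u. u \<bullet> (A *v u)"]) auto
qed


lemma cond_exp_ext:
  fixes P :: "((real^'d) \<times> real) measure" and g :: "real^'d \<Rightarrow> real"
  assumes P: "sets P = sets borel"
    and CE: "is_cond_exp_X P m"
    and g[measurable]: "g \<in> borel_measurable borel"
    and i1: "integrable P (\<lambda>z. g (fst z) * snd z)"
    and i2: "integrable P (\<lambda>z. g (fst z) * m (fst z))"
  shows "(LINT z|P. g (fst z) * snd z) = (LINT z|P. g (fst z) * m (fst z))"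
proof -
  have mP: "measurable P = measurable borel" by (rule ext measurable_cong_sets[OF P refl])+
  have fstm[measurable]: "fst \<in> measurable P borel"
    unfolding mP by (intro borel_measurable_continuous_onI continuous_intros)
  have sndm[measurable]: "snd \<in> borel_measurable P"
    unfolding mP by (intro borel_measurable_continuous_onI continuous_intros)
  have mm[measurable]: "m \<in> borel_measurable borel" using CE unfolding is_cond_exp_X_def by blast
  have isnd: "integrable P snd" and im: "integrable P (\<lambda>z. m (fst z))"
    and ce: "\<And>A. A \<in> sets borel \<Longrightarrow> (LINT z|P. indicator A (fst z) * snd z) = (LINT z|P. indicator A (fst z) * m (fst z))"
    using CE unfolding is_cond_exp_X_def by auto
  obtain F where F: "\<And>i. simple_function borel (F i)"
    "\<And>x. (\<lambda>i. F i x) \<longlonglongrightarrow> g x" "\<And>i x. dist (F i x) 0 \<le> 2 * dist (g x) 0"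
    using borel_measurable_implies_sequence_metric[OF g, of 0] by auto
  have Fm[measurable]: "F i \<in> borel_measurable borel" for i
    using F(1) by (rule borel_measurable_simple_function)
  have indint1: "integrable P (\<lambda>z. indicator A (fst z) * snd z)" if "A \<in> sets borel" for A
  proof (rule Bochner_Integration.integrable_bound[OF isnd])
    show "(\<lambda>z. indicator A (fst z) * snd z) \<in> borel_measurable P" using that by measurable
    show "AE z in P. norm (indicator A (fst z) * snd z) \<le> norm (snd z)"
      by (intro AE_I2) (auto simp: indicator_def)
  qed
  have indint2: "integrable P (\<lambda>z. indicator A (fst z) * m (fst z))" if "A \<in> sets borel" for A
  proof (rule Bochner_Integration.integrable_bound[OF im])
    show "(\<lambda>z. indicator A (fst z) * m (fst z)) \<in> borel_measurable P" using that by measurable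
    show "AE z in P. norm (indicator A (fst z) * m (fst z)) \<le> norm (m (fst z))"
      by (intro AE_I2) (auto simp: indicator_def)
  qed
  have simple_eq: "(LINT z|P. F i (fst z) * snd z) = (LINT z|P. F i (fst z) * m (fst z))" for i
  proof -
    let ?R = "F i ` space borel"
    have fin: "finite ?R" using F(1) by (rule simple_functionD)
    have sets: "F i -` {y} \<inter> space borel \<in> sets borel" for y using F(1) by (rule simple_functionD)
    have rep: "F i x = (\<Sum>y\<in>?R. y * indicator (F i -` {y} \<inter> space borel) x)" for x
    proof -
      have "F i x = (\<Sum>y\<in>?R. indicator (F i -` {y} \<inter> space borel) x *\<^sub>R y)"
        by (rule simple_function_indicator_representation_banach[OF F(1)]) simp
      also have "\<dots> = (\<Sum>y\<in>?R. y * indicator (F i -` {y} \<inter> space borel) x)"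
        by (intro sum.cong refl) (simp only: real_scaleR_def mult.commute)
      finally show ?thesis .
    qed
    have "(LINT z|P. F i (fst z) * snd z) = (LINT z|P. (\<Sum>y\<in>?R. y * (indicator (F i -` {y} \<inter> space borel) (fst z) * snd z)))"
      by (subst rep) (simp add: sum_distrib_right mult.assoc)
    also have "\<dots> = (\<Sum>y\<in>?R. y * (LINT z|P. indicator (F i -` {y} \<inter> space borel) (fst z) * snd z))"
      using indint1[OF sets] by (simp add: integral_sum)
    also have "\<dots> = (\<Sum>y\<in>?R. y * (LINT z|P. indicator (F i -` {y} \<inter> space borel) (fst z) * m (fst z)))"
      using ce[OF sets] by simp
    also have "\<dots> = (LINT z|P. (\<Sum>y\<in>?R. y * (indicator (F i -` {y} \<inter> space borel) (fst z) * m (fst z))))"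
      using indint2[OF sets] by (simp add: integral_sum)
    also have "\<dots> = (LINT z|P. F i (fst z) * m (fst z))"
      by (rule Bochner_Integration.integral_cong[OF refl]) (subst rep, simp add: sum_distrib_right mult.assoc)
    finally show ?thesis .
  qed
  have lim1: "(\<lambda>i. LINT z|P. F i (fst z) * snd z) \<longlonglongrightarrow> (LINT z|P. g (fst z) * snd z)"
  proof (rule integral_dominated_convergence[where w="\<lambda>z. 2 * norm (g (fst z) * snd z)"])
    show "integrable P (\<lambda>z. 2 * norm (g (fst z) * snd z))" using i1 by auto
    show "AE z in P. (\<lambda>i. F i (fst z) * snd z) \<longlonglongrightarrow> g (fst z) * snd z"
      using F(2) by (intro AE_I2 tendsto_intros) auto
    show "AE z in P. norm (F i (fst z) * snd z) \<le> 2 * norm (g (fst z) * snd z)" for i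
    proof (intro AE_I2)
      fix z :: "(real^'d) \<times> real"
      have "\<bar>F i (fst z)\<bar> \<le> 2 * \<bar>g (fst z)\<bar>" using F(3)[of i "fst z"] by simp
      then have "\<bar>F i (fst z)\<bar> * \<bar>snd z\<bar> \<le> 2 * \<bar>g (fst z)\<bar> * \<bar>snd z\<bar>" by (rule mult_right_mono) simp
      then show "norm (F i (fst z) * snd z) \<le> 2 * norm (g (fst z) * snd z)" by (simp add: abs_mult)
    qed
  qed measurable
  have lim2: "(\<lambda>i. LINT z|P. F i (fst z) * m (fst z)) \<longlonglongrightarrow> (LINT z|P. g (fst z) * m (fst z))"
  proof (rule integral_dominated_convergence[where w="\<lambda>z. 2 * norm (g (fst z) * m (fst z))"])
    show "integrable P (\<lambda>z. 2 * norm (g (fst z) * m (fst z)))" using i2 by auto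
    show "AE z in P. (\<lambda>i. F i (fst z) * m (fst z)) \<longlonglongrightarrow> g (fst z) * m (fst z)"
      using F(2) by (intro AE_I2 tendsto_intros) auto
    show "AE z in P. norm (F i (fst z) * m (fst z)) \<le> 2 * norm (g (fst z) * m (fst z))" for i
    proof (intro AE_I2)
      fix z :: "(real^'d) \<times> real"
      have "\<bar>F i (fst z)\<bar> \<le> 2 * \<bar>g (fst z)\<bar>" using F(3)[of i "fst z"] by simp
      then have "\<bar>F i (fst z)\<bar> * \<bar>m (fst z)\<bar> \<le> 2 * \<bar>g (fst z)\<bar> * \<bar>m (fst z)\<bar>" by (rule mult_right_mono) simp
      then show "norm (F i (fst z) * m (fst z)) \<le> 2 * norm (g (fst z) * m (fst z))" by (simp add: abs_mult)
    qed
  qed measurable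
  show ?thesis using lim1 lim2 simple_eq LIMSEQ_unique by simp
qed


lemma mv_sum_left: fixes v :: "real^'n"
  shows "(\<Sum>i\<in>I. (A i :: real^'n^'m)) *v v = (\<Sum>i\<in>I. A i *v v)"
  by (induction I rule: infinite_finite_induct) (auto simp: matrix_vector_mult_add_rdistrib)

lemma emp_add: "emp n S (\<lambda>z. f z + g z) = emp n S f + emp n S g"
  unfolding emp_def by (simp add: sum.distrib scaleR_add_right)

lemma smv: "(c *\<^sub>R (A::real^'n^'m)) *v v = c *\<^sub>R (A *v v)"
  by (metis scaleR_matrix_vector_assoc)

lemma emp_mv: fixes f :: "_ \<Rightarrow> real^'n^'m" shows "emp n S f *v v = emp n S (\<lambda>z. f z *v v)"
  unfolding emp_def by (simp only: smv mv_sum_left)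

lemma emp_Rv: "(R :: real^'n^'m) *v emp n S f = emp n S (\<lambda>z. R *v f z)"
  unfolding emp_def by (simp add: matrix_vector_mult_scaleR mv_sum)

lemma outer_mv: "outer x *v v = (x \<bullet> v) *\<^sub>R x"
  by (simp add: outer_def matrix_vector_mult_def inner_vec_def vec_eq_iff sum_distrib_left algebra_simps)

lemma norm_emp: "norm (emp n S f) = norm (\<Sum>i<n. f (S i)) / real n"
  unfolding emp_def by simp

lemma part1:
  fixes Sig H R Q :: "real^'d^'d"
  assumes RQ: "R ** Q = mat 1" and QR: "Q ** R = mat 1" and RSR: "R ** Sig ** R = mat 1"
    and sn: "spec_norm (R ** (H - Sig) ** R) < 1"
  shows "matrix_inv H ** H = mat 1"
    and "norm (Q *v (matrix_inv H *v e)) \<le> 1 / (1 - spec_norm (R ** (H - Sig) ** R)) * norm (R *v e)"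
proof -
  define D where "D = R ** (H - Sig) ** R"
  define s where "s = spec_norm D"
  have s1: "s < 1" using sn unfolding s_def D_def .
  have Dv: "D *v v = R *v (H *v (R *v v)) - v" for v
  proof -
    have "D *v v = R *v (H *v (R *v v)) - R *v (Sig *v (R *v v))"
      unfolding D_def by (simp add: matrix_vector_mul_assoc[symmetric] matrix_vector_mult_diff_rdistrib
          matrix_vector_mult_diff_distrib)
    also have "R *v (Sig *v (R *v v)) = v"
      using RSR by (simp add: matrix_vector_mul_assoc matrix_mul_assoc)
    finally show ?thesis .
  qed
  have lb: "(1 - s) * norm v \<le> norm (R *v (H *v (R *v v)))" for v
  proof -
    have "norm (D *v v) \<le> s * norm v"
      unfolding s_def spec_norm_def by (rule onorm) simp
    moreover have "R *v (H *v (R *v v)) = v + D *v v" using Dv by simp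
    moreover have "norm v - norm (D *v v) \<le> norm (v + D *v v)"
      by (rule norm_diff_ineq)
    ultimately show ?thesis by (simp add: algebra_simps)
  qed
  have RQv: "R *v (Q *v y) = y" for y using RQ by (simp add: matrix_vector_mul_assoc)
  have inj: "inj ((*v) H)"
  proof -
    have "y = 0" if "H *v y = 0" for y
    proof -
      have "(1 - s) * norm (Q *v y) \<le> norm (R *v (H *v (R *v (Q *v y))))" by (rule lb)
      also have "\<dots> = 0" using that by (simp add: RQv)
      finally have "Q *v y = 0" using s1 by (simp add: mult_le_0_iff)
      then have "R *v (Q *v y) = 0" by simp
      then show "y = 0" by (simp add: RQv)
    qed
    then show ?thesis by (simp add: linear_injective_0[OF matrix_vector_mul_linear])
  qed
  then obtain Bi where Bi: "Bi ** H = mat 1" using matrix_left_invertible_injective by blast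
  then have HB: "H ** Bi = mat 1" using matrix_left_right_inverse by blast
  have Hi: "matrix_inv H = Bi" by (rule matrix_inv_eq[OF HB])
  show "matrix_inv H ** H = mat 1" using Bi Hi by simp
  define v where "v = Q *v (matrix_inv H *v e)"
  have "R *v v = Bi *v e" unfolding v_def Hi by (rule RQv)
  moreover have "H *v (Bi *v e) = e" using HB by (simp add: matrix_vector_mul_assoc)
  ultimately have "R *v (H *v (R *v v)) = R *v e" by simp
  then have "(1 - s) * norm v \<le> norm (R *v e)" using lb[of v] by simp
  then have "norm v \<le> norm (R *v e) / (1 - s)" using s1 by (simp add: field_simps)
  then show "norm (Q *v (matrix_inv H *v e)) \<le> 1 / (1 - spec_norm (R ** (H - Sig) ** R)) * norm (R *v e)"
    unfolding v_def s_def D_def by simp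
qed


theorem proposition8:
  fixes P :: "((real^'d) \<times> real) measure"
    and w m :: "real^'d \<Rightarrow> real"
    and n :: nat and rho b t :: real
  assumes P: "prob_space P" "sets P = sets borel"
    and W: "in_W P w"
    and CE: "is_cond_exp_X P m"
    and int_Sigma: "integrable P (\<lambda>z. w (fst z) *\<^sub>R outer (fst z))"
    and int_XY: "integrable P (\<lambda>z. (w (fst z) * snd z) *\<^sub>R fst z)"
    and pd: "posdef (Sigma_w P w)"
    and rho: "rho \<ge> 1"
    and C1: "AE z in P. sqrt (w (fst z)) * norm (mat_inv_sqrt (Sigma_w P w) *v fst z)
                          / sqrt (real CARD('d)) \<le> rho"
    and b: "b \<ge> 0"
    and C2: "AE z in P. w (fst z) * norm (mat_inv_sqrt (Sigma_w P w) *v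
                          (approx_w P w m (fst z) *\<^sub>R fst z)) / sqrt (real CARD('d)) \<le> b"
    and n: "n > 0"
    and t: "t > 0"
  shows
    "(\<forall>S. let \<Delta> = mat_inv_sqrt (Sigma_w P w) ** (Sigma_hat n S w - Sigma_w P w)
                    ** mat_inv_sqrt (Sigma_w P w)
          in spec_norm \<Delta> < 1 \<longrightarrow>
             anorm (Sigma_w P w) (beta_bar n S w m - beta_w P w)
               \<le> 1 / (1 - spec_norm \<Delta>) *
                 anorm (matrix_inv (Sigma_w P w))
                   (emp n S (\<lambda>z. (w (fst z) * approx_w P w m (fst z)) *\<^sub>R fst z)))
     \<and> measure (PiM {..<n} (\<lambda>_. P))
         {S \<in> space (PiM {..<n} (\<lambda>_. P)).
            anorm (matrix_inv (Sigma_w P w))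
              (emp n S (\<lambda>z. (w (fst z) * approx_w P w m (fst z)) *\<^sub>R fst z))
            \<le> sqrt ((LINT z|P. (norm (mat_inv_sqrt (Sigma_w P w) *v
                        ((w (fst z) * approx_w P w m (fst z)) *\<^sub>R fst z)))\<^sup>2) / real n)
                * (1 + sqrt (8 * t))
              + 4 * b * t * sqrt (real CARD('d)) / (3 * real n)}
       \<ge> 1 - exp (- t)
     \<and> (integrable P (\<lambda>z. w (fst z) * (approx_w P w m (fst z))\<^sup>2) \<longrightarrow>
         sqrt ((LINT z|P. (norm (mat_inv_sqrt (Sigma_w P w) *v
                    ((w (fst z) * approx_w P w m (fst z)) *\<^sub>R fst z)))\<^sup>2) / real n)
            * (1 + sqrt (8 * t))
          + 4 * b * t * sqrt (real CARD('d)) / (3 * real n)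
         \<le> sqrt (rho\<^sup>2 * real CARD('d) * (LINT z|P. w (fst z) * (approx_w P w m (fst z))\<^sup>2) / real n)
            * (1 + sqrt (8 * t))
          + 4 * b * t * sqrt (real CARD('d)) / (3 * real n))"
proof -
  interpret P: prob_space P by (rule P(1))
  let ?Sig = "Sigma_w P w"
  let ?a = "approx_w P w m"
  let ?beta = "beta_w P w"
  let ?d = "real CARD('d)"
  obtain U lam where onbU: "onb U" and eig: "\<forall>u\<in>U. ?Sig *v u = lam u *\<^sub>R u \<and> lam u > 0"
    using posdef_decomp[OF pd] by blast
  interpret O: onb U by (rule onbU)
  have eigU: "\<And>u. u \<in> U \<Longrightarrow> ?Sig *v u = lam u *\<^sub>R u" and lpos: "\<And>u. u \<in> U \<Longrightarrow> lam u > 0"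
    using eig by auto
  have lne: "\<And>u. u \<in> U \<Longrightarrow> lam u \<noteq> 0" using lpos by (metis less_irrefl)
  have lge: "\<And>u. u \<in> U \<Longrightarrow> lam u \<ge> 0" using lpos by (metis less_imp_le)
  have SigFC: "?Sig = O.fc lam" by (rule O.fc_eig[OF eigU])
  define Q where "Q = O.fc (\<lambda>u. sqrt (lam u))"
  define R where "R = O.fc (\<lambda>u. 1 / sqrt (lam u))"
  have sqQ: "mat_sqrt ?Sig = Q" unfolding Q_def by (rule O.mat_sqrt_fc[OF eigU lpos])
  have R_eq: "mat_inv_sqrt ?Sig = R"
    unfolding mat_inv_sqrt_def sqQ Q_def R_def using lpos lne lge by (intro O.fc_inv) (simp add: less_imp_neq[symmetric] less_imp_le)
  have RQ: "R ** Q = mat 1"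
    unfolding R_def Q_def O.fc_comp O.fc_one[symmetric] using lpos lne lge by (intro O.fc_cong) simp
  have QR: "Q ** R = mat 1"
    unfolding R_def Q_def O.fc_comp O.fc_one[symmetric] using lpos lne lge by (intro O.fc_cong) simp
  have QQ: "Q ** Q = ?Sig"
    unfolding SigFC Q_def O.fc_comp using lpos lne lge by (intro O.fc_cong) (simp add: less_imp_le)
  have Sinv: "matrix_inv ?Sig = O.fc (\<lambda>u. 1 / lam u)"
    unfolding SigFC using lpos lne lge by (intro O.fc_inv) simp
  have RR: "R ** R = matrix_inv ?Sig"
    unfolding Sinv R_def O.fc_comp using lpos lne lge by (intro O.fc_cong) (simp add: less_imp_le)
  have RSR: "R ** ?Sig ** R = mat 1"
    unfolding SigFC R_def O.fc_comp O.fc_one[symmetric]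
  proof (intro O.fc_cong)
    fix u assume u: "u \<in> U"
    have ss: "sqrt (lam u) * sqrt (lam u) = lam u" using lge[OF u] by simp
    have "sqrt (lam u) > 0" using lpos[OF u] by simp
    then show "1 / sqrt (lam u) * lam u * (1 / sqrt (lam u)) = 1"
      using ss by (simp add: field_simps)
  qed
  have SSi: "?Sig ** matrix_inv ?Sig = mat 1"
  proof -
    have "?Sig ** matrix_inv ?Sig = O.fc lam ** O.fc (\<lambda>u. 1 / lam u)" by (metis SigFC Sinv)
    also have "\<dots> = mat 1"
      unfolding O.fc_comp O.fc_one[symmetric] using lne by (intro O.fc_cong) simp
    finally show ?thesis .
  qed
  have Rsym: "transpose R = R" unfolding R_def by (rule O.fc_transpose)
  have Qsym: "transpose Q = Q" unfolding Q_def by (rule O.fc_transpose)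
  have anR: "anorm (matrix_inv ?Sig) v = norm (R *v v)" for v
  proof -
    have "v \<bullet> (matrix_inv ?Sig *v v) = (R *v v) \<bullet> (R *v v)"
      unfolding RR[symmetric] by (simp add: matrix_vector_mul_assoc[symmetric] sym_dot[OF Rsym])
    then show ?thesis unfolding anorm_def by (simp add: norm_eq_sqrt_inner)
  qed
  have anQ: "anorm ?Sig v = norm (Q *v v)" for v
  proof -
    have "v \<bullet> (?Sig *v v) = (Q *v v) \<bullet> (Q *v v)"
      unfolding QQ[symmetric] by (simp add: matrix_vector_mul_assoc[symmetric] sym_dot[OF Qsym])
    then show ?thesis unfolding anorm_def by (simp add: norm_eq_sqrt_inner)
  qed
  have w0: "\<And>x. 0 \<le> w x" using W unfolding in_W_def by blast
  have partA: "\<forall>S. let \<Delta> = mat_inv_sqrt (Sigma_w P w) ** (Sigma_hat n S w - Sigma_w P w)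
                    ** mat_inv_sqrt (Sigma_w P w)
          in spec_norm \<Delta> < 1 \<longrightarrow>
             anorm (Sigma_w P w) (beta_bar n S w m - beta_w P w)
               \<le> 1 / (1 - spec_norm \<Delta>) *
                 anorm (matrix_inv (Sigma_w P w))
                   (emp n S (\<lambda>z. (w (fst z) * approx_w P w m (fst z)) *\<^sub>R fst z))"
    unfolding Let_def R_eq
  proof (intro allI impI)
    fix S :: "nat \<Rightarrow> (real^'d) \<times> real"
    let ?H = "Sigma_hat n S w"
    let ?e = "emp n S (\<lambda>z. (w (fst z) * ?a (fst z)) *\<^sub>R fst z)"
    assume sn: "spec_norm (R ** (?H - ?Sig) ** R) < 1"
    note p1 = part1[OF RQ QR RSR sn]
    have Hb: "?H *v ?beta = emp n S (\<lambda>z. (w (fst z) * (fst z \<bullet> ?beta)) *\<^sub>R fst z)"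
      unfolding Sigma_hat_def emp_mv by (simp add: smv outer_mv)
    have "emp n S (\<lambda>z. (w (fst z) * m (fst z)) *\<^sub>R fst z) = ?e + ?H *v ?beta"
      unfolding Hb emp_add[symmetric]
      by (rule arg_cong[where f="emp n S"]) (auto simp: approx_w_def inner_commute algebra_simps)
    then have "beta_bar n S w m - ?beta = matrix_inv ?H *v ?e"
      unfolding beta_bar_def using p1(1)
      by (simp add: matrix_vector_right_distrib matrix_vector_mul_assoc)
    then show "anorm ?Sig (beta_bar n S w m - ?beta)
        \<le> 1 / (1 - spec_norm (R ** (?H - ?Sig) ** R)) * anorm (matrix_inv ?Sig) ?e"
      unfolding anQ anR using p1(2) by simp
  qed
  have partC: "integrable P (\<lambda>z. w (fst z) * (approx_w P w m (fst z))\<^sup>2) \<longrightarrow>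
         sqrt ((LINT z|P. (norm (mat_inv_sqrt (Sigma_w P w) *v
                    ((w (fst z) * approx_w P w m (fst z)) *\<^sub>R fst z)))\<^sup>2) / real n)
            * (1 + sqrt (8 * t))
          + 4 * b * t * sqrt (real CARD('d)) / (3 * real n)
         \<le> sqrt (rho\<^sup>2 * real CARD('d) * (LINT z|P. w (fst z) * (approx_w P w m (fst z))\<^sup>2) / real n)
            * (1 + sqrt (8 * t))
          + 4 * b * t * sqrt (real CARD('d)) / (3 * real n)"
    unfolding R_eq
  proof
    assume iwa: "integrable P (\<lambda>z. w (fst z) * (?a (fst z))\<^sup>2)"
    have "(LINT z|P. (norm (R *v ((w (fst z) * ?a (fst z)) *\<^sub>R fst z)))\<^sup>2)
        \<le> (LINT z|P. rho\<^sup>2 * ?d * (w (fst z) * (?a (fst z))\<^sup>2))"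
    proof (rule integral_mono_AE')
      show "integrable P (\<lambda>z. rho\<^sup>2 * ?d * (w (fst z) * (?a (fst z))\<^sup>2))" using iwa by simp
      show "AE z in P. 0 \<le> rho\<^sup>2 * ?d * (w (fst z) * (?a (fst z))\<^sup>2)" using w0 by simp
      show "AE z in P. (norm (R *v ((w (fst z) * ?a (fst z)) *\<^sub>R fst z)))\<^sup>2
          \<le> rho\<^sup>2 * ?d * (w (fst z) * (?a (fst z))\<^sup>2)"
        using C1 unfolding R_eq
      proof eventually_elim
        case (elim z)
        let ?x = "fst z"
        have dpos: "0 < sqrt ?d" by simp
        have "sqrt (w ?x) * norm (R *v ?x) \<le> rho * sqrt ?d"
          using elim dpos by (simp add: divide_le_eq)
        then have "(sqrt (w ?x) * norm (R *v ?x))\<^sup>2 \<le> (rho * sqrt ?d)\<^sup>2"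
          by (intro power_mono) (auto simp: w0)
        then have wx: "w ?x * (norm (R *v ?x))\<^sup>2 \<le> rho\<^sup>2 * ?d"
          using w0 by (simp add: power_mult_distrib)
        have "(norm (R *v ((w ?x * ?a ?x) *\<^sub>R ?x)))\<^sup>2 = (w ?x * (?a ?x)\<^sup>2) * (w ?x * (norm (R *v ?x))\<^sup>2)"
          by (simp add: matrix_vector_mult_scaleR power_mult_distrib power2_eq_square)
        also have "\<dots> \<le> (w ?x * (?a ?x)\<^sup>2) * (rho\<^sup>2 * ?d)"
          using wx w0 by (intro mult_left_mono) auto
        finally show ?case by (simp add: algebra_simps)
      qed
    qed
    then have "(LINT z|P. (norm (R *v ((w (fst z) * ?a (fst z)) *\<^sub>R fst z)))\<^sup>2) / real n
        \<le> rho\<^sup>2 * ?d * (LINT z|P. w (fst z) * (?a (fst z))\<^sup>2) / real n"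
      by (simp add: divide_right_mono)
    then have "sqrt ((LINT z|P. (norm (R *v ((w (fst z) * ?a (fst z)) *\<^sub>R fst z)))\<^sup>2) / real n)
        \<le> sqrt (rho\<^sup>2 * ?d * (LINT z|P. w (fst z) * (?a (fst z))\<^sup>2) / real n)"
      by (rule real_sqrt_le_mono)
    then show "sqrt ((LINT z|P. (norm (R *v ((w (fst z) * ?a (fst z)) *\<^sub>R fst z)))\<^sup>2) / real n)
            * (1 + sqrt (8 * t)) + 4 * b * t * sqrt ?d / (3 * real n)
         \<le> sqrt (rho\<^sup>2 * ?d * (LINT z|P. w (fst z) * (?a (fst z))\<^sup>2) / real n)
            * (1 + sqrt (8 * t)) + 4 * b * t * sqrt ?d / (3 * real n)"
      using t by (intro add_right_mono mult_right_mono) auto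
  qed
  have partB: "measure (PiM {..<n} (\<lambda>_. P))
         {S \<in> space (PiM {..<n} (\<lambda>_. P)).
            anorm (matrix_inv (Sigma_w P w))
              (emp n S (\<lambda>z. (w (fst z) * approx_w P w m (fst z)) *\<^sub>R fst z))
            \<le> sqrt ((LINT z|P. (norm (mat_inv_sqrt (Sigma_w P w) *v
                        ((w (fst z) * approx_w P w m (fst z)) *\<^sub>R fst z)))\<^sup>2) / real n)
                * (1 + sqrt (8 * t))
              + 4 * b * t * sqrt (real CARD('d)) / (3 * real n)}
       \<ge> 1 - exp (- t)"
  proof -
    define h where "h (z :: (real^'d) \<times> real) = (w (fst z) * ?a (fst z)) *\<^sub>R fst z" for z
    define Zf where "Zf z = R *v h z" for z
    define Bb where "Bb = b * sqrt ?d"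
    have mP: "measurable P = measurable borel" by (rule ext measurable_cong_sets[OF P(2) refl])+
    have fstm[measurable]: "fst \<in> measurable P borel"
      unfolding mP by (intro borel_measurable_continuous_onI continuous_intros)
    have sndm[measurable]: "snd \<in> borel_measurable P"
      unfolding mP by (intro borel_measurable_continuous_onI continuous_intros)
    have wm[measurable]: "w \<in> borel_measurable borel" using W unfolding in_W_def by blast
    have mm[measurable]: "m \<in> borel_measurable borel" using CE unfolding is_cond_exp_X_def by blast
    have betam[measurable]: "(\<lambda>x. ?beta \<bullet> x) \<in> borel_measurable borel"
      by (intro borel_measurable_continuous_onI continuous_intros)
    have am[measurable]: "?a \<in> borel_measurable borel" unfolding approx_w_def by measurable
    have hm[measurable]: "h \<in> borel_measurable P" unfolding h_def by measurable
    have Rm[measurable]: "(\<lambda>v. R *v v) \<in> borel_measurable borel"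
      by (intro borel_measurable_continuous_onI linear_continuous_on matrix_vector_mul_bounded_linear)
    have Zfm[measurable]: "Zf \<in> borel_measurable P"
      unfolding Zf_def by (rule measurable_compose[OF hm Rm])
    have dpos: "0 < sqrt ?d" by simp
    have b0: "0 \<le> Bb" unfolding Bb_def using b by simp
    have Zfb: "AE z in P. norm (Zf z) \<le> Bb"
      using C2 unfolding R_eq
    proof eventually_elim
      case (elim z)
      let ?x = "fst z"
      have "Zf z = w ?x *\<^sub>R (R *v (?a ?x *\<^sub>R ?x))"
        unfolding Zf_def h_def by (simp add: matrix_vector_mult_scaleR)
      then have "norm (Zf z) = w ?x * norm (R *v (?a ?x *\<^sub>R ?x))" using w0 by simp
      also have "\<dots> \<le> Bb" using elim dpos unfolding Bb_def by (simp add: divide_le_eq)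
      finally show ?case .
    qed
    define Zp where "Zp z = (if norm (Zf z) \<le> Bb then Zf z else 0)" for z
    have Zpm[measurable]: "Zp \<in> borel_measurable P" unfolding Zp_def by measurable
    interpret V: vb P Zp Bb
      by unfold_locales (auto simp: Zp_def b0)
    have AEeq: "AE z in P. Zp z = Zf z" using Zfb by eventually_elim (simp add: Zp_def)
    have intZf: "integrable P Zf"
      by (intro P.integrable_const_bound[where B=Bb] Zfb Zfm)
    have hQ: "h = (\<lambda>z. Q *v Zf z)"
      unfolding Zf_def using QR by (simp add: matrix_vector_mul_assoc)
    have inth: "integrable P h"
      unfolding hQ by (rule integrable_bounded_linear[OF matrix_vector_mul_bounded_linear intZf])
    define g1 where "g1 z = (w (fst z) * snd z) *\<^sub>R fst z" for z
    define g2 where "g2 (z :: (real^'d) \<times> real) = (w (fst z) * m (fst z)) *\<^sub>R fst z" for z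
    define g3 where "g3 (z :: (real^'d) \<times> real) = (w (fst z) *\<^sub>R outer (fst z)) *v ?beta" for z
    have hg: "h = (\<lambda>z. g2 z - g3 z)"
      unfolding h_def g2_def g3_def
      by (auto simp: smv outer_mv approx_w_def inner_commute algebra_simps)
    have blA: "bounded_linear (\<lambda>A::real^'d^'d. A *v ?beta)"
    proof -
      have "linear (\<lambda>A::real^'d^'d. A *v ?beta)"
        by (auto simp: linear_iff matrix_vector_mult_add_rdistrib smv)
      then show ?thesis by (simp add: linear_conv_bounded_linear)
    qed
    have int3: "integrable P g3" unfolding g3_def by (rule integrable_bounded_linear[OF blA int_Sigma])
    have E3: "integral\<^sup>L P g3 = ?Sig *v ?beta"
      unfolding g3_def Sigma_w_def by (rule integral_bounded_linear[OF blA int_Sigma])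
    have g2eq: "g2 = (\<lambda>z. h z + g3 z)" unfolding hg by simp
    have int2: "integrable P g2" unfolding g2eq using inth int3 by simp
    have int1: "integrable P g1" unfolding g1_def by (rule int_XY)
    have E2: "integral\<^sup>L P g2 = integral\<^sup>L P g1"
    proof (rule euclidean_eqI)
      fix bv :: "real^'d" assume bv: "bv \<in> Basis"
      define g where "g x = w x * (x \<bullet> bv)" for x
      have gm[measurable]: "g \<in> borel_measurable borel" unfolding g_def
        by (intro borel_measurable_times wm borel_measurable_continuous_onI continuous_intros)
      have e1: "(\<lambda>z. g1 z \<bullet> bv) = (\<lambda>z. g (fst z) * snd z)"
        unfolding g1_def g_def by (auto simp: algebra_simps)
      have e2: "(\<lambda>z. g2 z \<bullet> bv) = (\<lambda>z. g (fst z) * m (fst z))"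
        unfolding g2_def g_def by (auto simp: algebra_simps)
      have i1: "integrable P (\<lambda>z. g (fst z) * snd z)" unfolding e1[symmetric] using int1 by simp
      have i2: "integrable P (\<lambda>z. g (fst z) * m (fst z))" unfolding e2[symmetric] using int2 by simp
      have "integral\<^sup>L P g2 \<bullet> bv = (LINT z|P. g2 z \<bullet> bv)" using int2 by simp
      also have "\<dots> = (LINT z|P. g (fst z) * m (fst z))" unfolding e2 ..
      also have "\<dots> = (LINT z|P. g (fst z) * snd z)"
        by (rule cond_exp_ext[OF P(2) CE gm i1 i2, symmetric])
      also have "\<dots> = (LINT z|P. g1 z \<bullet> bv)" unfolding e1 ..
      also have "\<dots> = integral\<^sup>L P g1 \<bullet> bv" using int1 by simp
      finally show "integral\<^sup>L P g2 \<bullet> bv = integral\<^sup>L P g1 \<bullet> bv" .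
    qed
    have E1: "?Sig *v ?beta = integral\<^sup>L P g1"
      unfolding beta_w_def g1_def using SSi by (simp add: matrix_vector_mul_assoc)
    have Eh0: "integral\<^sup>L P h = 0"
      unfolding hg using int2 int3 E1 E2 E3 by simp
    have EZf: "integral\<^sup>L P Zf = 0"
      unfolding Zf_def using integral_bounded_linear[OF matrix_vector_mul_bounded_linear inth, of R] Eh0
      by simp
    have EZp: "integral\<^sup>L P Zp = 0"
      using integral_cong_AE[OF Zpm Zfm AEeq] EZf by simp
    define VZ where "VZ = (LINT z|P. (norm (Zf z))\<^sup>2)"
    have VZ0: "0 \<le> VZ" unfolding VZ_def by simp
    have vveq: "V.vv = VZ"
      unfolding V.vv_def VZ_def using AEeq by (intro integral_cong_AE) (measurable, auto elim: eventually_mono)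
    note main = V.vb_main[OF EZp n t, unfolded V.PP_def V.ps_def vveq]
    let ?Pi = "PiM {..<n} (\<lambda>_. P)"
    interpret PI: prob_space ?Pi by (rule prob_space_PiM) (rule P(1))
    define bnd where "bnd = sqrt (VZ / real n) * (1 + sqrt (8 * t)) + 4 * b * t * sqrt ?d / (3 * real n)"
    have npos: "0 < real n" using n by simp
    have bnd_eq: "(sqrt (real n * VZ) + sqrt (8 * real n * VZ * t) + 4 * Bb * t / 3) / real n = bnd"
    proof -
      have s1: "sqrt (real n * VZ) / real n = sqrt (VZ / real n)"
        using npos VZ0 by (simp add: real_sqrt_mult real_sqrt_divide field_simps)
      have s2: "sqrt (8 * real n * VZ * t) = sqrt (real n * VZ) * sqrt (8 * t)"
        by (simp add: real_sqrt_mult[symmetric] algebra_simps)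
      have "(sqrt (real n * VZ) + sqrt (8 * real n * VZ * t) + 4 * Bb * t / 3) / real n
          = sqrt (real n * VZ) / real n + sqrt (8 * real n * VZ * t) / real n + (4 * Bb * t / 3) / real n"
        by (simp add: add_divide_distrib)
      also have "sqrt (8 * real n * VZ * t) / real n = sqrt (VZ / real n) * sqrt (8 * t)"
        unfolding s2 s1[symmetric] by simp
      also have "(4 * Bb * t / 3) / real n = 4 * b * t * sqrt ?d / (3 * real n)"
        unfolding Bb_def by simp
      finally show ?thesis unfolding bnd_def s1 by (simp add: algebra_simps)
    qed
    have lhs_eq: "anorm (matrix_inv ?Sig) (emp n S h) = norm (\<Sum>i<n. Zf (S i)) / real n" for S
      unfolding anR emp_Rv norm_emp Zf_def ..
    have AE2: "AE S in ?Pi. \<forall>j\<in>{..<n}. Zp (S j) = Zf (S j)"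
    proof (intro eventually_ball_finite ballI)
      fix j assume "j \<in> {..<n}"
      then show "AE S in ?Pi. Zp (S j) = Zf (S j)"
        by (intro AE_PiM_component[where P="\<lambda>z. Zp z = Zf z"] AEeq P(1)) auto
    qed simp
    define Bs where "Bs = {y \<in> space ?Pi. norm (\<Sum>j<n. Zp (y j)) \<le> sqrt (real n * VZ) + sqrt (8 * real n * VZ * t) + 4 * Bb * t / 3}"
    define Ts where "Ts = {S \<in> space ?Pi. anorm (matrix_inv ?Sig) (emp n S h) \<le> bnd}"
    have Ts_eq: "Ts = {S \<in> space ?Pi. norm (\<Sum>i<n. Zf (S i)) / real n \<le> bnd}"
      unfolding Ts_def lhs_eq ..
    have Tsm: "Ts \<in> sets ?Pi" unfolding Ts_eq by measurable
    have "AE S in ?Pi. S \<in> Bs \<longrightarrow> S \<in> Ts"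
      using AE2
    proof eventually_elim
      case (elim S)
      show ?case
      proof
        assume S: "S \<in> Bs"
        have "(\<Sum>j<n. Zp (S j)) = (\<Sum>j<n. Zf (S j))" using elim by (intro sum.cong) auto
        then have "norm (\<Sum>i<n. Zf (S i)) \<le> sqrt (real n * VZ) + sqrt (8 * real n * VZ * t) + 4 * Bb * t / 3"
          using S unfolding Bs_def by simp
        then have "norm (\<Sum>i<n. Zf (S i)) / real n \<le> bnd"
          unfolding bnd_eq[symmetric] using npos by (intro divide_right_mono) auto
        then show "S \<in> Ts" using S unfolding Ts_eq Bs_def by simp
      qed
    qed
    then have "emeasure ?Pi Bs \<le> emeasure ?Pi Ts" by (rule emeasure_mono_AE[OF _ Tsm])
    then have "measure ?Pi Bs \<le> measure ?Pi Ts"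
      by (simp add: PI.emeasure_eq_measure)
    moreover have "1 - exp (- t) \<le> measure ?Pi Bs" using main unfolding Bs_def by simp
    ultimately have "1 - exp (- t) \<le> measure ?Pi Ts" by linarith
    then show ?thesis unfolding Ts_def bnd_def VZ_def Zf_def h_def R_eq by simp
  qed
  show ?thesis using partA partB partC by blast
qed


end
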